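(* Let $\varphi\in\mathcal{A}$ be w.h.i.s. Then, with $\pi:\mathcal{A}\to\mathcal{A}_\varphi$ the projection: every skew-symmetric $3$-derivation of $\mathcal{A}_\varphi$ is zero, so $H^3(\mathcal{A}_\varphi)=\{0\}$; the skew-symmetric $1$-derivations (resp. $2$-derivations) of $\mathcal{A}_\varphi$ are identified with $\{\pi(\vec f)\in\mathcal{A}_\varphi^3\mid\vec f\cdot\vec\nabla\varphi\in\langle\varphi\rangle\}$ (resp. $\{\pi(\vec f)\in\mathcal{A}_\varphi^3\mid\vec f\times\vec\nabla\varphi\in\langle\varphi\rangle\}$); and $H^0(\mathcal{A}_\varphi)\simeq\{\pi(f)\mid\vec\nabla f\times\vec\nabla\varphi\in\langle\varphi\rangle\}$, $H^1(\mathcal{A}_\varphi)\simeq\dfrac{\{\pi(\vec f)\mid\vec f\cdot\vec\nabla\varphi\in\langle\varphi\rangle,\ -\vec\nabla(\vec f\cdot\vec\nabla\varphi)+\mathrm{Div}(\vec f)\vec\nabla\varphi\in\langle\varphi\rangle\}}{\{\pi(\vec\nabla f\times\vec\nabla\varphi)\mid f\in\mathcal{A}\}}$, $H^2(\mathcal{A}_\varphi)\simeq\dfrac{\{\pi(\vec f)\mid\vec f\times\vec\nabla\varphi\in\langle\varphi\rangle\}}{\{\pi(-\vec\nabla(\vec f\cdot\vec\nabla\varphi)+\mathrm{Div}(\vec f)\vec\nabla\varphi)\mid\vec f\in\mathcal{A}^3,\ \vec f\cdot\vec\nabla\varphi\in\langle\varphi\rangle\}}$, where $\langle\varphi\rangle$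 means the ideal (or submodule of $\mathcal{A}^3$) generated by $\varphi$.
   Context: $\mathbf{F}$ is a field of characteristic zero and $\mathcal{A}=\mathbf{F}[x,y,z]$. Elements of $\mathcal{A}^3$ are treated as vector fields: $\vec f\cdot\vec g$, $\vec f\times\vec g$ are the usual inner and cross products, $\vec\nabla f=(\partial f/\partial x,\partial f/\partial y,\partial f/\partial z)$, $\vec\nabla\times$ is the curl and $\mathrm{Div}$ the divergence. Fix positive integers $\varpi_1,\varpi_2,\varpi_3$ without common divisor $>1$ (weights of $x,y,z$). A nonzero polynomial is weight homogeneous of degree $d$ if it is an $\mathbf{F}$-linear combination of monomials $x^ay^bz^c$ with $a\varpi_1+b\varpi_2+c\varpi_3=d$. $\varphi\in\mathcal{A}$ is w.h.i.s. if it is weight homogeneous and $\mathcal{A}_{sing}:=\mathcal{A}/\langle\partial_x\varphi,\partial_y\varphi,\partial_z\varphi\rangle$ is a nonzero finite-dimensional $\mathbf{F}$-vector space. The Poisson bracket $\{\cdot,\cdot\}_\varphi$ on $\mathcal{A}$ is determined by $\{x,y\}_\varphi=\partial_z\varphi$, $\{y,z\}_\varphi=\partial_x\varphi$, $\{z,x\}_\varphi=\partial_y\varphi$; $\varphi$ is a Casimir, so it induces a Poisson bracket $\{\cdot,\cdot\}_{\mathcal{A}_\varphi}$ on $\mathcal{A}_\varphi:=\mathcal{A}/\langle\varphi\rangle$ with $\{\pi(f),\pi(g)\}_{\mathcal{A}_\varphi}=\pi(\{f,g\}_\varphi)$; for $\vec f=(f_1,f_2,f_3)$, $\pi(\vec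 f):=(\pi(f_1),\pi(f_2),\pi(f_3))$. For a Poisson algebra $(\mathcal{B},\{\cdot,\cdot\})$, the Poisson cochains of degree $k$ are the skew-symmetric $k$-derivations $Q:\mathcal{B}^k\to\mathcal{B}$, with coboundary $\delta Q(f_0,\dots,f_k)=\sum_i(-1)^i\{f_i,Q(f_0,\dots,\widehat{f_i},\dots,f_k)\}+\sum_{i<j}(-1)^{i+j}Q(\{f_i,f_j\},f_0,\dots,\widehat{f_i},\dots,\widehat{f_j},\dots,f_k)$; $H^k(\mathcal{A}_\varphi)$ denotes the resulting Poisson cohomology of $(\mathcal{A}_\varphi,\{\cdot,\cdot\}_{\mathcal{A}_\varphi})$. A $1$-derivation of $\mathcal{A}_\varphi$ is identified with $(Q[\pi x],Q[\pi y],Q[\pi z])$ and a $2$-derivation with $(Q[\pi y,\pi z],Q[\pi z,\pi x],Q[\pi x,\pi y])$. *)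

theory Defs
  imports "HOL-Computational_Algebra.Polynomial" "HOL-Library.Function_Algebras"
          "HOL-Library.Product_Plus"
begin

text \<open>F[x,y,z] is represented as ((F[x])[y])[z], i.e. the type 'a poly poly poly:
  the outermost variable is z, the middle one y and the innermost one x.\<close>

type_synonym 'a mpoly = "'a poly poly poly"
type_synonym 'a vec3 = "'a mpoly \<times> 'a mpoly \<times> 'a mpoly"

definition varX :: "'a::idom mpoly" where "varX = [:[:[:0, 1:]:]:]"
definition varY :: "'a::idom mpoly" where "varY = [:[:0, 1:]:]"
definition varZ :: "'a::idom mpoly" where "varZ = [:0, 1:]"

definition mconst :: "'a::idom \<Rightarrow> 'a mpoly" where "mconst c = [:[:[:c:]:]:]"

definition mcoeff :: "'a::idom mpoly \<Rightarrow> nat \<Rightarrow> nat \<Rightarrow> nat \<Rightarrow> 'a" where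
  "mcoeff p a b c = coeff (coeff (coeff p c) b) a"

definition dX :: "'a::idom mpoly \<Rightarrow> 'a mpoly" where "dX p = map_poly (map_poly pderiv) p"
definition dY :: "'a::idom mpoly \<Rightarrow> 'a mpoly" where "dY p = map_poly pderiv p"
definition dZ :: "'a::idom mpoly \<Rightarrow> 'a mpoly" where "dZ p = pderiv p"

definition grad :: "'a::idom mpoly \<Rightarrow> 'a vec3" where
  "grad f = (dX f, dY f, dZ f)"

definition dot :: "'a::idom vec3 \<Rightarrow> 'a vec3 \<Rightarrow> 'a mpoly" where
  "dot u v = (case u of (u1, u2, u3) \<Rightarrow> case v of (v1, v2, v3) \<Rightarrow> u1 * v1 + u2 * v2 + u3 * v3)"

definition cross :: "'a::idom vec3 \<Rightarrow> 'a vec3 \<Rightarrow> 'a vec3" where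
  "cross u v = (case u of (u1, u2, u3) \<Rightarrow> case v of (v1, v2, v3) \<Rightarrow>
      (u2 * v3 - u3 * v2, u3 * v1 - u1 * v3, u1 * v2 - u2 * v1))"

definition Div :: "'a::idom vec3 \<Rightarrow> 'a mpoly" where
  "Div u = (case u of (u1, u2, u3) \<Rightarrow> dX u1 + dY u2 + dZ u3)"

definition vsmult :: "'a::idom mpoly \<Rightarrow> 'a vec3 \<Rightarrow> 'a vec3" where
  "vsmult g u = (case u of (u1, u2, u3) \<Rightarrow> (g * u1, g * u2, g * u3))"

definition in_ideal :: "'a::idom mpoly \<Rightarrow> 'a mpoly \<Rightarrow> bool" where
  "in_ideal \<phi> f \<longleftrightarrow> (\<exists>h. f = \<phi> * h)"

definition vin_ideal :: "'a::idom mpoly \<Rightarrow> 'a vec3 \<Rightarrow> bool" where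
  "vin_ideal \<phi> u \<longleftrightarrow> in_ideal \<phi> (fst u) \<and> in_ideal \<phi> (fst (snd u)) \<and> in_ideal \<phi> (snd (snd u))"

definition weight_homogeneous ::
    "nat \<Rightarrow> nat \<Rightarrow> nat \<Rightarrow> nat \<Rightarrow> 'a::idom mpoly \<Rightarrow> bool" where
  "weight_homogeneous w1 w2 w3 d p \<longleftrightarrow> p \<noteq> 0 \<and>
     (\<forall>a b c. mcoeff p a b c \<noteq> 0 \<longrightarrow> a * w1 + b * w2 + c * w3 = d)"

definition jac_ideal :: "'a::idom mpoly \<Rightarrow> 'a mpoly set" where
  "jac_ideal \<phi> = {a * dX \<phi> + b * dY \<phi> + c * dZ \<phi> | a b c. True}"

text \<open>A_sing = A / jac_ideal is a nonzero finite-dimensional F-vector space.\<close>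
definition Asing_nonzero_findim :: "'a::idom mpoly \<Rightarrow> bool" where
  "Asing_nonzero_findim \<phi> \<longleftrightarrow> 1 \<notin> jac_ideal \<phi> \<and>
     (\<exists>S. finite S \<and> (\<forall>p. \<exists>c. p - (\<Sum>s\<in>S. mconst (c s) * s) \<in> jac_ideal \<phi>))"

definition whis :: "nat \<Rightarrow> nat \<Rightarrow> nat \<Rightarrow> 'a::idom mpoly \<Rightarrow> bool" where
  "whis w1 w2 w3 \<phi> \<longleftrightarrow> (\<exists>d. weight_homogeneous w1 w2 w3 d \<phi>) \<and> Asing_nonzero_findim \<phi>"

text \<open>Poisson bracket on A: {f,g}_phi = grad f . (grad g x grad phi); on A_phi it is
  computed on representatives.\<close>
definition pb :: "'a::idom mpoly \<Rightarrow> 'a mpoly \<Rightarrow> 'a mpoly \<Rightarrow> 'a mpoly" where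
  "pb \<phi> f g = dot (grad f) (cross (grad g) (grad \<phi>))"

text \<open>A map Q : A_phi^k -> A_phi is represented by a lift Q : A^k -> A (arguments given as
  a list of length k); all identities are required modulo <phi>, and well-definedness on
  classes is required explicitly.\<close>
definition skew_derivation :: "'a::idom mpoly \<Rightarrow> nat \<Rightarrow> ('a mpoly list \<Rightarrow> 'a mpoly) \<Rightarrow> bool" where
  "skew_derivation \<phi> k Q \<longleftrightarrow>
     (\<forall>fs gs. length fs = k \<longrightarrow> length gs = k \<longrightarrow> (\<forall>i<k. in_ideal \<phi> (fs ! i - gs ! i))
        \<longrightarrow> in_ideal \<phi> (Q fs - Q gs)) \<and>
     (\<forall>fs i g h a b. length fs = k \<longrightarrow> i < k \<longrightarrow>
        in_ideal \<phi> (Q (fs[i := mconst a * g + mconst b * h])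
                     - (mconst a * Q (fs[i := g]) + mconst b * Q (fs[i := h])))) \<and>
     (\<forall>fs i g h. length fs = k \<longrightarrow> i < k \<longrightarrow>
        in_ideal \<phi> (Q (fs[i := g * h]) - (g * Q (fs[i := h]) + h * Q (fs[i := g])))) \<and>
     (\<forall>fs i j. length fs = k \<longrightarrow> i < j \<longrightarrow> j < k \<longrightarrow>
        in_ideal \<phi> (Q (fs[i := fs ! j, j := fs ! i]) + Q fs))"

definition del :: "nat \<Rightarrow> 'b list \<Rightarrow> 'b list" where
  "del i xs = take i xs @ drop (Suc i) xs"

text \<open>Poisson coboundary (applied to a list f_0, ..., f_k of length k+1).\<close>
definition cobound :: "'a::idom mpoly \<Rightarrow> ('a mpoly list \<Rightarrow> 'a mpoly) \<Rightarrow> 'a mpoly list \<Rightarrow> 'a mpoly" where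
  "cobound \<phi> Q fs =
     (\<Sum>i<length fs. (-1) ^ i * pb \<phi> (fs ! i) (Q (del i fs))) +
     (\<Sum>i<length fs. \<Sum>j<length fs. if i < j
        then (-1) ^ (i + j) * Q (pb \<phi> (fs ! i) (fs ! j) # del i (del j fs)) else 0)"

definition cocycles :: "'a::idom mpoly \<Rightarrow> nat \<Rightarrow> ('a mpoly list \<Rightarrow> 'a mpoly) set" where
  "cocycles \<phi> k = {Q. skew_derivation \<phi> k Q \<and>
      (\<forall>fs. length fs = Suc k \<longrightarrow> in_ideal \<phi> (cobound \<phi> Q fs))}"

definition coboundaries :: "'a::idom mpoly \<Rightarrow> nat \<Rightarrow> ('a mpoly list \<Rightarrow> 'a mpoly) set" where
  "coboundaries \<phi> k = {Q. skew_derivation \<phi> k Q \<and>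
      (if k = 0 then in_ideal \<phi> (Q [])
       else (\<exists>P. skew_derivation \<phi> (k - 1) P \<and>
              (\<forall>fs. length fs = k \<longrightarrow> in_ideal \<phi> (Q fs - cobound \<phi> P fs))))}"

text \<open>quot_iso Z B smZ V W smV: there is an F-linear isomorphism Z/B ~ V/W, presented as an
  F-linear (modulo W) map Phi : Z -> V inducing a bijection Z/B -> V/W.\<close>
definition quot_iso ::
  "'u::ab_group_add set \<Rightarrow> 'u set \<Rightarrow> ('c \<Rightarrow> 'u \<Rightarrow> 'u) \<Rightarrow>
   'v::ab_group_add set \<Rightarrow> 'v set \<Rightarrow> ('c \<Rightarrow> 'v \<Rightarrow> 'v) \<Rightarrow> bool" where
  "quot_iso Z B smZ V W smV \<longleftrightarrow> (\<exists>\<Phi>.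
      (\<forall>z\<in>Z. \<Phi> z \<in> V) \<and>
      (\<forall>z1\<in>Z. \<forall>z2\<in>Z. \<Phi> (z1 + z2) - (\<Phi> z1 + \<Phi> z2) \<in> W) \<and>
      (\<forall>c. \<forall>z\<in>Z. \<Phi> (smZ c z) - smV c (\<Phi> z) \<in> W) \<and>
      (\<forall>v\<in>V. \<exists>z\<in>Z. v - \<Phi> z \<in> W) \<and>
      (\<forall>z\<in>Z. \<Phi> z \<in> W \<longleftrightarrow> z \<in> B))"

definition cochain_smult :: "'a::idom \<Rightarrow> ('a mpoly list \<Rightarrow> 'a mpoly) \<Rightarrow> ('a mpoly list \<Rightarrow> 'a mpoly)" where
  "cochain_smult c Q = (\<lambda>fs. mconst c * Q fs)"

end

theory Submission
  imports Defs
begin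


definition isder :: "('b::comm_ring_1 \<Rightarrow> 'b) \<Rightarrow> bool" where
  "isder D \<longleftrightarrow> (\<forall>a b. D (a + b) = D a + D b) \<and> (\<forall>a b. D (a * b) = a * D b + b * D a)"

lemma isder_0: "isder D \<Longrightarrow> D 0 = 0"
  unfolding isder_def by (metis add_cancel_right_right add_0)

lemma isder_add: "isder D \<Longrightarrow> D (a + b) = D a + D b"
  unfolding isder_def by blast

lemma isder_mult: "isder D \<Longrightarrow> D (a * b) = a * D b + b * D a"
  unfolding isder_def by blast

lemma isder_minus: "isder D \<Longrightarrow> D (- a) = - D a"
  by (metis isder_add isder_0 add.right_inverse add_eq_0_iff)

lemma isder_diff: "isder D \<Longrightarrow> D (a - b) = D a - D b"
  by (metis isder_add isder_minus diff_conv_add_uminus)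

lemma isder_sum: "isder D \<Longrightarrow> D (sum f A) = sum (\<lambda>x. D (f x)) A"
  by (induction A rule: infinite_finite_induct) (auto simp: isder_0 isder_add)

lemma isder_1: "isder D \<Longrightarrow> D 1 = 0"
  using isder_mult[of D 1 1] by simp

lemma isder_of_nat: "isder D \<Longrightarrow> D (of_nat n) = 0"
  by (induction n) (auto simp: isder_0 isder_add isder_1)

lemma isder_of_nat_mult: "isder D \<Longrightarrow> D (of_nat n * a) = of_nat n * D a"
  by (simp add: isder_mult isder_of_nat)

lemma isder_pderiv: "isder (pderiv :: 'a::idom poly \<Rightarrow> _)"
  unfolding isder_def by (simp add: pderiv_add pderiv_mult)

lemma isder_map_poly:
  assumes D: "isder D" shows "isder (map_poly D)"
proof -
  have D0: "D 0 = 0" using isder_0[OF D] .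
  have add: "map_poly D (p + q) = map_poly D p + map_poly D q" for p q
    by (rule poly_eqI) (simp add: coeff_map_poly D0 isder_add[OF D])
  have mult: "map_poly D (p * q) = p * map_poly D q + q * map_poly D p" for p q
  proof (rule poly_eqI)
    fix n
    have "coeff (map_poly D (p * q)) n = (\<Sum>i\<le>n. D (coeff p i * coeff q (n-i)))"
      by (simp add: coeff_map_poly D0 coeff_mult isder_sum[OF D])
    also have "\<dots> = (\<Sum>i\<le>n. coeff p i * D (coeff q (n-i))) + (\<Sum>i\<le>n. coeff q (n-i) * D (coeff p i))"
      by (simp add: isder_mult[OF D] sum.distrib)
    also have "(\<Sum>i\<le>n. coeff q (n-i) * D (coeff p i)) = (\<Sum>i\<le>n. coeff q i * D (coeff p (n-i)))"
      by (rule sum.reindex_bij_witness[where i="\<lambda>i. n - i" and j="\<lambda>i. n - i"]) auto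
    finally show "coeff (map_poly D (p * q)) n = coeff (p * map_poly D q + q * map_poly D p) n"
      by (simp add: coeff_mult coeff_map_poly D0)
  qed
  show ?thesis unfolding isder_def using add mult by blast
qed

lemma pderiv_map_poly_comm:
  assumes D: "isder D" shows "pderiv (map_poly D p) = map_poly D (pderiv p)"
  by (rule poly_eqI) (simp add: coeff_pderiv coeff_map_poly isder_0[OF D] isder_of_nat_mult[OF D] del: of_nat_Suc)

lemma isder_dX: "isder (dX :: 'a::idom mpoly \<Rightarrow> _)"
  unfolding dX_def[abs_def] by (intro isder_map_poly isder_pderiv)
lemma isder_dY: "isder (dY :: 'a::idom mpoly \<Rightarrow> _)"
  unfolding dY_def[abs_def] by (intro isder_map_poly isder_pderiv)
lemma isder_dZ: "isder (dZ :: 'a::idom mpoly \<Rightarrow> _)"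
  unfolding dZ_def[abs_def] by (intro isder_map_poly isder_pderiv)

lemma dYX: "dY (dX p) = dX (dY p)"
proof -
  have "map_poly pderiv (map_poly (map_poly pderiv) p) = map_poly (pderiv \<circ> map_poly pderiv) p"
    by (simp add: map_poly_map_poly)
  also have "\<dots> = map_poly (map_poly pderiv \<circ> pderiv) p"
    by (simp add: o_def pderiv_map_poly_comm[OF isder_pderiv])
  also have "\<dots> = map_poly (map_poly pderiv) (map_poly pderiv p)"
    by (simp add: map_poly_map_poly)
  finally show ?thesis unfolding dX_def dY_def .
qed

lemma dZX: "dZ (dX p) = dX (dZ p)"
  unfolding dX_def dZ_def
  by (rule pderiv_map_poly_comm[OF isder_map_poly[OF isder_pderiv]])

lemma dZY: "dZ (dY p) = dY (dZ p)"
  unfolding dY_def dZ_def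
  by (rule pderiv_map_poly_comm[OF isder_pderiv])

lemmas dX_add = isder_add[OF isder_dX]
lemmas dY_add = isder_add[OF isder_dY]
lemmas dZ_add = isder_add[OF isder_dZ]
lemmas dX_mult = isder_mult[OF isder_dX]
lemmas dY_mult = isder_mult[OF isder_dY]
lemmas dZ_mult = isder_mult[OF isder_dZ]
lemmas dX_diff = isder_diff[OF isder_dX]
lemmas dY_diff = isder_diff[OF isder_dY]
lemmas dZ_diff = isder_diff[OF isder_dZ]
lemmas dX_minus = isder_minus[OF isder_dX]
lemmas dY_minus = isder_minus[OF isder_dY]
lemmas dZ_minus = isder_minus[OF isder_dZ]
lemmas dX_0 = isder_0[OF isder_dX]
lemmas dY_0 = isder_0[OF isder_dY]
lemmas dZ_0 = isder_0[OF isder_dZ]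

lemmas dsimps = dX_add dY_add dZ_add dX_mult dY_mult dZ_mult dX_diff dY_diff dZ_diff
  dX_minus dY_minus dZ_minus dX_0 dY_0 dZ_0 dYX dZX dZY

lemma d_const [simp]: "dX (mconst c) = 0" "dY (mconst c) = 0" "dZ (mconst c) = 0"
  by (simp_all add: dX_def dY_def dZ_def mconst_def map_poly_pCons)

lemma d_var [simp]:
  "dX (varX :: 'a::idom mpoly) = 1" "dY (varX :: 'a::idom mpoly) = 0" "dZ (varX :: 'a::idom mpoly) = 0"
  "dX (varY :: 'a::idom mpoly) = 0" "dY (varY :: 'a::idom mpoly) = 1" "dZ (varY :: 'a::idom mpoly) = 0"
  "dX (varZ :: 'a::idom mpoly) = 0" "dY (varZ :: 'a::idom mpoly) = 0" "dZ (varZ :: 'a::idom mpoly) = 1"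
  by (simp_all add: dX_def dY_def dZ_def varX_def varY_def varZ_def pderiv_pCons one_pCons map_poly_pCons)



lemma H1_identity:
  fixes g h \<phi> F1 F2 F3 :: "'a::idom mpoly"
  shows "pb \<phi> g (dot (grad h) (F1,F2,F3)) - pb \<phi> h (dot (grad g) (F1,F2,F3)) - dot (grad (pb \<phi> g h)) (F1,F2,F3)
    = dot (cross (grad g) (grad h)) (- grad (dot (F1,F2,F3) (grad \<phi>)) + vsmult (Div (F1,F2,F3)) (grad \<phi>))"
  unfolding pb_def dot_def cross_def grad_def Div_def vsmult_def
  by (simp add: dsimps algebra_simps)

lemma H2_identity:
  fixes g h k \<phi> F1 F2 F3 :: "'a::idom mpoly"
  defines "Q2 \<equiv> \<lambda>a b. dot (cross (grad a) (grad b)) (F1,F2,F3)"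
  shows "pb \<phi> g (Q2 h k) - pb \<phi> h (Q2 g k) + pb \<phi> k (Q2 g h)
     - Q2 (pb \<phi> g h) k + Q2 (pb \<phi> g k) h - Q2 (pb \<phi> h k) g
    = - dot (grad g) (cross (grad h) (grad k)) * (dX \<phi> * (dY F3 - dZ F2) + dY \<phi> * (dZ F1 - dX F3) + dZ \<phi> * (dX F2 - dY F1))"
  unfolding Q2_def pb_def dot_def cross_def grad_def
  by (simp add: dsimps algebra_simps)



lemma in_ideal_0 [simp]: "in_ideal \<phi> 0" unfolding in_ideal_def by (rule exI[of _ 0]) simp
lemma in_ideal_self [simp]: "in_ideal \<phi> (\<phi> * h)" unfolding in_ideal_def by blast
lemma in_ideal_add [intro]: "in_ideal \<phi> a \<Longrightarrow> in_ideal \<phi> b \<Longrightarrow> in_ideal \<phi> (a + b)"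
proof -
  assume "in_ideal \<phi> a" "in_ideal \<phi> b"
  then obtain h1 h2 where "a = \<phi> * h1" "b = \<phi> * h2" unfolding in_ideal_def by blast
  then have "a + b = \<phi> * (h1 + h2)" by (simp add: distrib_left)
  then show ?thesis unfolding in_ideal_def by blast
qed
lemma in_ideal_minus [simp]: "in_ideal \<phi> (- a) \<longleftrightarrow> in_ideal \<phi> a"
proof
  assume "in_ideal \<phi> (- a)"
  then obtain h1 where "- a = \<phi> * h1" unfolding in_ideal_def by blast
  then have "a = \<phi> * (- h1)" by (metis minus_minus mult_minus_right)
  then show "in_ideal \<phi> a" unfolding in_ideal_def by blast
next
  assume "in_ideal \<phi> a"
  then obtain h1 where "a = \<phi> * h1" unfolding in_ideal_def by blast
  then have "- a = \<phi> * (- h1)" by simp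
  then show "in_ideal \<phi> (- a)" unfolding in_ideal_def by blast
qed
lemma in_ideal_diff [intro]: "in_ideal \<phi> a \<Longrightarrow> in_ideal \<phi> b \<Longrightarrow> in_ideal \<phi> (a - b)"
  using in_ideal_add[of \<phi> a "- b"] by simp
lemma in_ideal_multl [intro]: "in_ideal \<phi> a \<Longrightarrow> in_ideal \<phi> (c * a)"
proof -
  assume "in_ideal \<phi> a"
  then obtain h1 where "a = \<phi> * h1" unfolding in_ideal_def by blast
  then have "c * a = \<phi> * (c * h1)" by (simp add: mult.left_commute)
  then show ?thesis unfolding in_ideal_def by blast
qed
lemma in_ideal_multr [intro]: "in_ideal \<phi> a \<Longrightarrow> in_ideal \<phi> (a * c)"
  using in_ideal_multl[of \<phi> a c] by (simp add: mult.commute)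
lemma in_ideal_sum: "(\<And>i. i \<in> A \<Longrightarrow> in_ideal \<phi> (f i)) \<Longrightarrow> in_ideal \<phi> (sum f A)"
  by (induction A rule: infinite_finite_induct) auto
lemma in_ideal_comm: "in_ideal \<phi> (a - b) \<Longrightarrow> in_ideal \<phi> (b - a)"
  using in_ideal_minus[of \<phi> "a - b"] by simp
lemma in_ideal_trans: "in_ideal \<phi> (a - b) \<Longrightarrow> in_ideal \<phi> (b - c) \<Longrightarrow> in_ideal \<phi> (a - c)"
  using in_ideal_add[of \<phi> "a - b" "b - c"] by simp

lemma mconst_simps [simp]:
  "mconst 0 = 0" "mconst 1 = 1" "mconst (a + b) = mconst a + mconst b"
  "mconst (a * b) = mconst a * mconst b" "mconst (- a) = - mconst a"
  by (simp_all add: mconst_def one_pCons)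

lemma in_ideal_half:
  fixes q :: "'a::field_char_0 mpoly"
  assumes "in_ideal \<phi> (q + q)" shows "in_ideal \<phi> q"
proof -
  have h: "(1/2 + 1/2 :: 'a) = 1" by simp
  have "mconst (1/2) * (q + q) = (mconst (1/2) + mconst (1/2)) * q" by (simp add: algebra_simps)
  also have "\<dots> = mconst (1/2 + 1/2) * q" by (simp only: mconst_simps)
  also have "\<dots> = q" by (simp only: h mconst_simps mult_1)
  finally have "q = mconst (1/2) * (q + q)" by simp
  thus ?thesis using assms in_ideal_multl by metis
qed

lemma vin_ideal_0 [simp]: "vin_ideal \<phi> 0"
  by (simp add: vin_ideal_def zero_prod_def)



lemma pCons_split: "pCons a p = [:a:] + [:0, 1:] * (p :: 'a::comm_ring_1 poly)"
  by simp

lemma mpoly_induct [case_names const X Y Z add mult]: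
  fixes P :: "'a::idom mpoly \<Rightarrow> bool"
  assumes const: "\<And>c. P (mconst c)" and X: "P varX" and Y: "P varY" and Z: "P varZ"
    and add: "\<And>a b. P a \<Longrightarrow> P b \<Longrightarrow> P (a + b)"
    and mult: "\<And>a b. P a \<Longrightarrow> P b \<Longrightarrow> P (a * b)"
  shows "P p"
proof -
  have L1: "P [:[:c:]:]" for c :: "'a poly"
  proof (induction c)
    case 0 then show ?case using const[of 0] by (simp add: mconst_def)
  next
    case (pCons a r)
    have "[:[:pCons a r:]:] = mconst a + varX * [:[:r:]:]"
      by (subst pCons_split) (simp add: mconst_def varX_def)
    moreover have "P (mconst a + varX * [:[:r:]:])" using pCons const X add mult by blast
    ultimately show ?case by simp
  qed
  have L2: "P [:b:]" for b :: "'a poly poly"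
  proof (induction b)
    case 0 then show ?case using L1[of 0] by simp
  next
    case (pCons a r)
    have "[:pCons a r:] = [:[:a:]:] + varY * [:r:]"
      by (subst pCons_split) (simp add: varY_def)
    moreover have "P ([:[:a:]:] + varY * [:r:])" using pCons L1 Y add mult by blast
    ultimately show ?case by simp
  qed
  show ?thesis
  proof (induction p)
    case 0 then show ?case using L2[of 0] by simp
  next
    case (pCons a r)
    have "pCons a r = [:a:] + varZ * r"
      by (subst pCons_split) (simp add: varZ_def)
    moreover have "P ([:a:] + varZ * r)" using pCons L2 Z add mult by blast
    ultimately show ?case by simp
  qed
qed

definition slotder :: "'a::idom mpoly \<Rightarrow> ('a mpoly \<Rightarrow> 'a mpoly) \<Rightarrow> bool" where
  "slotder \<phi> D \<longleftrightarrow>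
     (\<forall>g h a b. in_ideal \<phi> (D (mconst a * g + mconst b * h) - (mconst a * D g + mconst b * D h))) \<and>
     (\<forall>g h. in_ideal \<phi> (D (g * h) - (g * D h + h * D g)))"

lemma slotder_chain:
  assumes "slotder \<phi> D"
  shows "in_ideal \<phi> (D p - (dX p * D varX + dY p * D varY + dZ p * D varZ))"
proof -
  have lin: "in_ideal \<phi> (D (mconst a * g + mconst b * h) - (mconst a * D g + mconst b * D h))" for a b g h
    using assms unfolding slotder_def by blast
  have leib: "in_ideal \<phi> (D (g * h) - (g * D h + h * D g))" for g h
    using assms unfolding slotder_def by blast
  have D1: "in_ideal \<phi> (D 1)" using leib[of 1 1] by simp
  have Dc: "in_ideal \<phi> (D (mconst c))" for c
  proof -
    have "in_ideal \<phi> (D (mconst c * 1 + mconst 0 * 1) - (mconst c * D 1 + mconst 0 * D 1))"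
      by (rule lin)
    then have "in_ideal \<phi> (D (mconst c) - mconst c * D 1)" by simp
    from in_ideal_add[OF this in_ideal_multl[OF D1, of "mconst c"]] show ?thesis by simp
  qed
  have Dadd: "in_ideal \<phi> (D (a + b) - (D a + D b))" for a b
    using lin[of 1 a 1 b] by simp
  show ?thesis
  proof (induction p rule: mpoly_induct)
    case (const c) then show ?case using Dc by simp
  next
    case X then show ?case by simp
  next
    case Y then show ?case by simp
  next
    case Z then show ?case by simp
  next
    case (add a b)
    have eq: "D (a + b) - (dX (a + b) * D varX + dY (a + b) * D varY + dZ (a + b) * D varZ)
      = (D (a + b) - (D a + D b)) + (D a - (dX a * D varX + dY a * D varY + dZ a * D varZ))
        + (D b - (dX b * D varX + dY b * D varY + dZ b * D varZ))"
      by (simp add: dX_add dY_add dZ_add algebra_simps)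
    show ?case unfolding eq using add.IH Dadd[of a b] by (intro in_ideal_add)
  next
    case (mult a b)
    have eq: "D (a * b) - (dX (a * b) * D varX + dY (a * b) * D varY + dZ (a * b) * D varZ)
      = (D (a * b) - (a * D b + b * D a)) + a * (D b - (dX b * D varX + dY b * D varY + dZ b * D varZ))
        + b * (D a - (dX a * D varX + dY a * D varY + dZ a * D varZ))"
      by (simp add: dX_mult dY_mult dZ_mult algebra_simps)
    show ?case unfolding eq using mult.IH leib[of a b] by (intro in_ideal_add in_ideal_multl)
  qed
qed

lemma slotder_zero:
  assumes "slotder \<phi> D" "in_ideal \<phi> (D varX)" "in_ideal \<phi> (D varY)" "in_ideal \<phi> (D varZ)"
  shows "in_ideal \<phi> (D p)"
proof -
  have "in_ideal \<phi> (dX p * D varX + dY p * D varY + dZ p * D varZ)"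
    using assms by (simp add: in_ideal_add in_ideal_multl)
  with slotder_chain[OF assms(1), of p] show ?thesis
    using in_ideal_add by fastforce
qed



lemma LA:
  fixes J :: "'a::field mpoly set" and u :: "nat \<Rightarrow> 'a mpoly"
  assumes fin: "finite S"
    and J0: "0 \<in> J" and Jadd: "\<And>x y. x \<in> J \<Longrightarrow> y \<in> J \<Longrightarrow> x + y \<in> J"
    and Jsc: "\<And>c x. x \<in> J \<Longrightarrow> mconst c * x \<in> J"
    and sp: "\<And>p. \<exists>c. p - (\<Sum>s\<in>S. mconst (c s) * s) \<in> J"
  shows "\<exists>a. (\<exists>j\<le>card S. a j \<noteq> 0) \<and> (\<Sum>j\<le>card S. mconst (a j) * u j) \<in> J"
proof -
  interpret mv: vector_space "\<lambda>c (p::'a mpoly). mconst c * p"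
    by unfold_locales (simp_all add: distrib_left distrib_right mult.assoc)
  define n where "n = card S"
  have Jsum: "(\<And>i. i \<in> A \<Longrightarrow> f i \<in> J) \<Longrightarrow> sum f A \<in> J" for f and A :: "'b set"
    by (induction A rule: infinite_finite_induct) (auto simp: J0 Jadd)
  have Jdiff: "x \<in> J \<Longrightarrow> y \<in> J \<Longrightarrow> x - y \<in> J" for x y
    using Jadd[of x "mconst (-1) * y"] Jsc[of y "-1"] by simp
  have "\<forall>j. \<exists>cj. u j - (\<Sum>s\<in>S. mconst (cj s) * s) \<in> J" using sp by blast
  from choice[OF this] obtain c where c: "\<And>j. u j - (\<Sum>s\<in>S. mconst (c j s) * s) \<in> J"
    by blast
  define v where "v j = (\<Sum>s\<in>S. mconst (c j s) * s)" for j
  have uv: "u j - v j \<in> J" for j using c unfolding v_def .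
  show ?thesis
  proof (cases "inj_on v {..n}")
    case False
    then obtain i j where ij: "i \<le> n" "j \<le> n" "i \<noteq> j" "v i = v j"
      unfolding inj_on_def by auto
    define a where "a k = (if k = i then 1 else if k = j then -1 else (0::'a))" for k
    have "(\<Sum>k\<le>n. mconst (a k) * u k) = (\<Sum>k\<in>{i, j}. mconst (a k) * u k)"
      by (rule sum.mono_neutral_right) (use ij in \<open>auto simp: a_def\<close>)
    also have "\<dots> = u i - u j" using ij by (simp add: a_def)
    also have "\<dots> = (u i - v i) - (u j - v j)" using ij by simp
    finally have "(\<Sum>k\<le>n. mconst (a k) * u k) \<in> J" using uv Jdiff by simp
    moreover have "a i \<noteq> 0" by (simp add: a_def)
    ultimately show ?thesis using ij unfolding n_def by blast
  next
    case True
    define V where "V = v ` {..n}"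
    have cardV: "card V = Suc n" unfolding V_def using True by (simp add: card_image)
    have sc: "mconst e * s \<in> mv.span S" if "s \<in> S" for s e
      using mv.span_scale[OF mv.span_base[OF that], of e] by simp
    have Vsp: "V \<subseteq> mv.span S"
      unfolding V_def v_def
      by (auto intro!: mv.span_sum sc)
    have "\<not> mv.independent V"
    proof
      assume "mv.independent V"
      from mv.independent_span_bound[OF fin this Vsp] cardV show False
        unfolding n_def by simp
    qed
    moreover have "finite V" unfolding V_def by simp
    ultimately obtain w where w: "\<exists>x\<in>V. w x \<noteq> 0" "(\<Sum>x\<in>V. mconst (w x) * x) = 0"
      using mv.dependent_finite by blast
    define a where "a j = w (v j)" for j
    have "(\<Sum>j\<le>n. mconst (a j) * v j) = (\<Sum>x\<in>V. mconst (w x) * x)"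
      unfolding V_def a_def by (simp add: sum.reindex[OF True])
    then have s0: "(\<Sum>j\<le>n. mconst (a j) * v j) = 0" using w by simp
    have "(\<Sum>j\<le>n. mconst (a j) * u j) = (\<Sum>j\<le>n. mconst (a j) * (u j - v j)) + (\<Sum>j\<le>n. mconst (a j) * v j)"
      by (simp add: algebra_simps sum.distrib[symmetric])
    also have "\<dots> = (\<Sum>j\<le>n. mconst (a j) * (u j - v j))" using s0 by simp
    finally have "(\<Sum>j\<le>n. mconst (a j) * u j) \<in> J"
      using Jsum[of "{..n}" "\<lambda>j. mconst (a j) * (u j - v j)"] Jsc uv by simp
    moreover obtain j where "j \<le> n" "a j \<noteq> 0" using w(1) unfolding V_def a_def by auto
    ultimately show ?thesis unfolding n_def by blast
  qed
qed

lemma const_dvd_coeff: "[:c:] dvd g \<Longrightarrow> c dvd coeff g i"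
  by (auto simp: dvd_def)

lemma const_dvd_mult_unit_lead:
  fixes c :: "'b::idom" and R h :: "'b poly"
  assumes u: "lead_coeff R * t = 1" and d: "[:c:] dvd h * R"
  shows "[:c:] dvd h"
  using d
proof (induction "degree h" arbitrary: h rule: less_induct)
  case less
  show ?case
  proof (cases "h = 0")
    case True then show ?thesis by simp
  next
    case False
    define k where "k = degree h"
    have R0: "R \<noteq> 0" using u by auto
    have "coeff (h * R) (degree h + degree R) = lead_coeff h * lead_coeff R"
      by (rule coeff_mult_degree_sum)
    then have "c dvd lead_coeff h * lead_coeff R" using const_dvd_coeff[OF less.prems] by metis
    then have "c dvd lead_coeff h * lead_coeff R * t" by simp
    then have "c dvd lead_coeff h" using u by (simp add: mult.assoc)
    then obtain e where e: "lead_coeff h = c * e" by (auto simp: dvd_def)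
    define h' where "h' = h - monom (lead_coeff h) k"
    have m: "[:c:] dvd monom (lead_coeff h) k"
      by (rule dvdI[of _ _ "monom e k"]) (simp add: e smult_monom)
    have "h * R = h' * R + monom (lead_coeff h) k * R" by (simp add: h'_def algebra_simps)
    then have "[:c:] dvd h' * R" using less.prems m
      by (metis add_diff_cancel dvd_diff dvd_mult2)
    show ?thesis
    proof (cases "h' = 0")
      case True
      then show ?thesis using m unfolding h'_def by simp
    next
      case False
      have "degree h' < degree h"
      proof (rule degree_lessI)
        show "h' \<noteq> 0 \<or> 0 < degree h" using False by simp
        show "\<forall>j\<ge>degree h. coeff h' j = 0"
          by (auto simp: h'_def k_def coeff_monom coeff_eq_0)
      qed
      then have "[:c:] dvd h'" using less.hyps \<open>[:c:] dvd h' * R\<close> by blast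
      then show ?thesis using m unfolding h'_def by (metis diff_add_cancel dvd_add)
    qed
  qed
qed

lemma pc_add: "[:x + y:] = [:x:] + [:y:]" by simp

lemma pCons_sum: "[:sum f A:] = (\<Sum>i\<in>A. [:f i:])"
  by (induction A rule: infinite_finite_induct) (auto simp del: add_pCons simp add: pc_add)

lemma whis_nonzero: "whis w1 w2 w3 \<phi> \<Longrightarrow> \<phi> \<noteq> 0"
  unfolding whis_def weight_homogeneous_def by blast

lemma key_lemma:
  fixes \<phi> q :: "'a::field_char_0 mpoly"
  assumes wh: "whis w1 w2 w3 \<phi>"
    and qx: "in_ideal \<phi> (dX \<phi> * q)" and qy: "in_ideal \<phi> (dY \<phi> * q)" and qz: "in_ideal \<phi> (dZ \<phi> * q)"
  shows "in_ideal \<phi> q"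
proof -
  have phi0: "\<phi> \<noteq> 0" using whis_nonzero[OF wh] .
  obtain S where fin: "finite S" and sp: "\<And>p. \<exists>c. p - (\<Sum>s\<in>S. mconst (c s) * s) \<in> jac_ideal \<phi>"
    using wh unfolding whis_def Asing_nonzero_findim_def by blast
  define J where "J = jac_ideal \<phi>"
  have J0: "0 \<in> J" unfolding J_def jac_ideal_def by (auto intro!: exI[of _ 0])
  have Jadd: "x \<in> J \<Longrightarrow> y \<in> J \<Longrightarrow> x + y \<in> J" for x y
  proof -
    assume "x \<in> J" "y \<in> J"
    then obtain a1 b1 c1 a2 b2 c2 where "x = a1 * dX \<phi> + b1 * dY \<phi> + c1 * dZ \<phi>"
        "y = a2 * dX \<phi> + b2 * dY \<phi> + c2 * dZ \<phi>" unfolding J_def jac_ideal_def by blast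
    then have "x + y = (a1 + a2) * dX \<phi> + (b1 + b2) * dY \<phi> + (c1 + c2) * dZ \<phi>"
      by (simp add: algebra_simps)
    then show "x + y \<in> J" unfolding J_def jac_ideal_def by blast
  qed
  have Jsc: "x \<in> J \<Longrightarrow> mconst e * x \<in> J" for x e
  proof -
    assume "x \<in> J"
    then obtain a1 b1 c1 where "x = a1 * dX \<phi> + b1 * dY \<phi> + c1 * dZ \<phi>"
      unfolding J_def jac_ideal_def by blast
    then have "mconst e * x = (mconst e * a1) * dX \<phi> + (mconst e * b1) * dY \<phi> + (mconst e * c1) * dZ \<phi>"
      by (simp add: algebra_simps)
    then show "mconst e * x \<in> J" unfolding J_def jac_ideal_def by blast
  qed
  have Jq: "r \<in> J \<Longrightarrow> in_ideal \<phi> (r * q)" for r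
  proof -
    assume "r \<in> J"
    then obtain a1 b1 c1 where "r = a1 * dX \<phi> + b1 * dY \<phi> + c1 * dZ \<phi>"
      unfolding J_def jac_ideal_def by blast
    then have "r * q = a1 * (dX \<phi> * q) + b1 * (dY \<phi> * q) + c1 * (dZ \<phi> * q)"
      by (simp add: algebra_simps)
    then show ?thesis using qx qy qz by (simp add: in_ideal_add in_ideal_multl)
  qed
  define n where "n = card S"
  obtain a where a: "\<exists>j\<le>n. a j \<noteq> 0" "(\<Sum>j\<le>n. mconst (a j) * varX ^ j) \<in> J"
    using LA[OF fin J0 Jadd Jsc sp[unfolded J_def[symmetric]], of "\<lambda>j. varX ^ j"] unfolding n_def by blast
  obtain b where b: "\<exists>j\<le>n. b j \<noteq> 0" "(\<Sum>j\<le>n. mconst (b j) * varZ ^ j) \<in> J"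
    using LA[OF fin J0 Jadd Jsc sp[unfolded J_def[symmetric]], of "\<lambda>j. varZ ^ j"] unfolding n_def by blast
  define Pa where "Pa = (\<Sum>j\<le>n. monom (a j) j)"
  define P where "P = (\<Sum>j\<le>n. mconst (a j) * varX ^ j)"
  define R where "R = (\<Sum>j\<le>n. mconst (b j) * varZ ^ j)"
  have PPa: "P = [:[:Pa:]:]"
    unfolding P_def Pa_def pCons_sum
    by (simp add: mconst_def varX_def poly_const_pow monom_altdef)
  have coeffPa: "coeff Pa k = (if k \<le> n then a k else 0)" for k
    unfolding Pa_def by (simp add: coeff_sum coeff_monom)
  have Pa0: "Pa \<noteq> 0" using a(1) coeffPa by (metis coeff_0)
  have RR: "R = (\<Sum>j\<le>n. monom [:[:b j:]:] j)"
    unfolding R_def by (simp add: mconst_def varZ_def monom_altdef)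
  have coeffR: "coeff R k = (if k \<le> n then [:[:b k:]:] else 0)" for k
    unfolding RR by (simp add: coeff_sum coeff_monom)
  have R0: "R \<noteq> 0" using b(1) coeffR by (metis coeff_0 pCons_eq_0_iff)
  have "degree R \<le> n" by (rule degree_le) (simp add: coeffR)
  then have lc: "lead_coeff R = [:[:b (degree R):]:]" by (simp add: coeffR)
  then have bd: "b (degree R) \<noteq> 0" using R0 by auto
  have u: "lead_coeff R * [:[:1 / b (degree R):]:] = 1"
    using bd by (simp add: lc one_pCons)
  have "in_ideal \<phi> (P * q)" using Jq a(2) unfolding P_def by blast
  then obtain h1 where h1: "P * q = \<phi> * h1" unfolding in_ideal_def by blast
  have "in_ideal \<phi> (R * q)" using Jq b(2) unfolding R_def by blast
  then obtain h2 where h2: "R * q = \<phi> * h2" unfolding in_ideal_def by blast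
  have "\<phi> * (h1 * R) = \<phi> * (h2 * P)"
    using h1 h2 by (metis mult.assoc mult.commute)
  then have "h1 * R = h2 * P" using phi0 by simp
  then have "[:[:Pa:]:] dvd h1 * R" unfolding PPa by (metis dvd_triv_right)
  then have "[:[:Pa:]:] dvd h1" by (rule const_dvd_mult_unit_lead[OF u])
  then obtain k where "h1 = P * k" unfolding PPa by (auto simp: dvd_def)
  then have "P * q = P * (\<phi> * k)" using h1 by (simp add: algebra_simps)
  moreover have "P \<noteq> 0" using Pa0 PPa by simp
  ultimately have "q = \<phi> * k" by simp
  then show ?thesis unfolding in_ideal_def by blast
qed



lemma sd_lin:
  assumes "skew_derivation \<phi> k Q" "length fs = k" "i < k"
  shows "in_ideal \<phi> (Q (fs[i := mconst a * g + mconst b * h]) - (mconst a * Q (fs[i := g]) + mconst b * Q (fs[i := h])))"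
proof -
  have "\<forall>fs i g h a b. length fs = k \<longrightarrow> i < k \<longrightarrow>
        in_ideal \<phi> (Q (fs[i := mconst a * g + mconst b * h])
                     - (mconst a * Q (fs[i := g]) + mconst b * Q (fs[i := h])))"
    using assms(1) unfolding skew_derivation_def by (elim conjE)
  then show ?thesis using assms(2,3) by simp
qed

lemma sd_leib:
  assumes "skew_derivation \<phi> k Q" "length fs = k" "i < k"
  shows "in_ideal \<phi> (Q (fs[i := g * h]) - (g * Q (fs[i := h]) + h * Q (fs[i := g])))"
proof -
  have "\<forall>fs i g h. length fs = k \<longrightarrow> i < k \<longrightarrow>
        in_ideal \<phi> (Q (fs[i := g * h]) - (g * Q (fs[i := h]) + h * Q (fs[i := g])))"
    using assms(1) unfolding skew_derivation_def by (elim conjE)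
  then show ?thesis using assms(2,3) by simp
qed

lemma sd_slot:
  assumes "skew_derivation \<phi> k Q" "length fs = k" "i < k"
  shows "slotder \<phi> (\<lambda>g. Q (fs[i := g]))"
  unfolding slotder_def using sd_lin[OF assms] sd_leib[OF assms] by simp

lemma sd_swap:
  assumes "skew_derivation \<phi> k Q" "length fs = k" "i < j" "j < k"
  shows "in_ideal \<phi> (Q (fs[i := fs ! j, j := fs ! i]) + Q fs)"
proof -
  have "\<forall>fs i j. length fs = k \<longrightarrow> i < j \<longrightarrow> j < k \<longrightarrow>
        in_ideal \<phi> (Q (fs[i := fs ! j, j := fs ! i]) + Q fs)"
    using assms(1) unfolding skew_derivation_def by (elim conjE)
  then show ?thesis using assms(2-4) by simp
qed

lemma sd_wd:
  assumes "skew_derivation \<phi> k Q" "length fs = k" "length gs = k"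
    "\<And>i. i < k \<Longrightarrow> in_ideal \<phi> (fs ! i - gs ! i)"
  shows "in_ideal \<phi> (Q fs - Q gs)"
proof -
  have "\<forall>fs gs. length fs = k \<longrightarrow> length gs = k \<longrightarrow> (\<forall>i<k. in_ideal \<phi> (fs ! i - gs ! i))
        \<longrightarrow> in_ideal \<phi> (Q fs - Q gs)"
    using assms(1) unfolding skew_derivation_def by (elim conjE)
  then show ?thesis using assms(2-4) by simp
qed

lemma sd_zero_arg:
  assumes "skew_derivation \<phi> k Q" "length fs = k" "i < k"
  shows "in_ideal \<phi> (Q (fs[i := 0]))"
proof -
  have "in_ideal \<phi> (Q (fs[i := mconst 0 * 0 + mconst 0 * 0]) - (mconst 0 * Q (fs[i := 0]) + mconst 0 * Q (fs[i := 0])))"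
    by (rule sd_lin[OF assms])
  then show ?thesis by simp
qed

lemma sd_rep:
  fixes Q :: "'a::field_char_0 mpoly list \<Rightarrow> 'a mpoly"
  assumes "skew_derivation \<phi> k Q" "length fs = k" "i < j" "j < k" "fs ! i = fs ! j"
  shows "in_ideal \<phi> (Q fs)"
proof -
  have "fs[i := fs ! j] = fs" using assms(5) list_update_id[of fs i] by simp
  then have "fs[i := fs ! j, j := fs ! i] = fs" using assms(5) by simp
  then show ?thesis using sd_swap[OF assms(1-4)] by (rule_tac in_ideal_half) simp
qed

definition Phi1 :: "('a::idom mpoly list \<Rightarrow> 'a mpoly) \<Rightarrow> 'a vec3" where
  "Phi1 Q = (Q [varX], Q [varY], Q [varZ])"

definition Q1 :: "'a::idom vec3 \<Rightarrow> 'a mpoly list \<Rightarrow> 'a mpoly" where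
  "Q1 F fs = dot (grad (hd fs)) F"

lemma chain1:
  assumes "skew_derivation \<phi> 1 Q"
  shows "in_ideal \<phi> (Q [g] - Q1 (Phi1 Q) [g])"
proof -
  have "slotder \<phi> (\<lambda>g. Q ([0][0 := g]))" by (rule sd_slot[OF assms]) auto
  then have "slotder \<phi> (\<lambda>g. Q [g])" by simp
  from slotder_chain[OF this, of g] show ?thesis
    by (simp add: Q1_def Phi1_def dot_def grad_def algebra_simps)
qed

definition Phi2 :: "('a::idom mpoly list \<Rightarrow> 'a mpoly) \<Rightarrow> 'a vec3" where
  "Phi2 Q = (Q [varY, varZ], Q [varZ, varX], Q [varX, varY])"

definition Q2 :: "'a::idom vec3 \<Rightarrow> 'a mpoly list \<Rightarrow> 'a mpoly" where
  "Q2 F fs = dot (cross (grad (fs ! 0)) (grad (fs ! 1))) F"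

lemma chain2:
  fixes Q :: "'a::field_char_0 mpoly list \<Rightarrow> 'a mpoly"
  assumes Q: "skew_derivation \<phi> 2 Q"
  shows "in_ideal \<phi> (Q [g, h] - Q2 (Phi2 Q) [g, h])"
proof -
  have s0: "slotder \<phi> (\<lambda>g. Q [g, h])" for h
    using sd_slot[OF Q, of "[0, h]" 0] by simp
  have s1: "slotder \<phi> (\<lambda>h. Q [g, h])" for g
    using sd_slot[OF Q, of "[g, 0]" 1] by simp
  have sw: "in_ideal \<phi> (Q [b, a] + Q [a, b])" for a b
    using sd_swap[OF Q, of "[a, b]" 0 1] by simp
  have rp: "in_ideal \<phi> (Q [a, a])" for a
    using sd_rep[OF Q, of "[a, a]" 0 1] by simp
  have c0: "in_ideal \<phi> (Q [g, h] - (dX g * Q [varX, h] + dY g * Q [varY, h] + dZ g * Q [varZ, h]))"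
    using slotder_chain[OF s0] by simp
  have c1: "in_ideal \<phi> (Q [a, h] - (dX h * Q [a, varX] + dY h * Q [a, varY] + dZ h * Q [a, varZ]))" for a
    using slotder_chain[OF s1] by simp
  define xx where "xx = Q [varX, varX]"
  define yy where "yy = Q [varY, varY]"
  define zz where "zz = Q [varZ, varZ]"
  define xy where "xy = Q [varX, varY]"
  define yx where "yx = Q [varY, varX]"
  define xz where "xz = Q [varX, varZ]"
  define zx where "zx = Q [varZ, varX]"
  define yz where "yz = Q [varY, varZ]"
  define zy where "zy = Q [varZ, varY]"
  define p1 where "p1 = yz + zy"
  define p2 where "p2 = zx + xz"
  define p3 where "p3 = xy + yx"
  have P1: "in_ideal \<phi> p1" "in_ideal \<phi> p2" "in_ideal \<phi> p3"
    using sw[of varY varZ] sw[of varZ varX] sw[of varX varY]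
    unfolding p1_def p2_def p3_def yz_def zy_def zx_def xz_def xy_def yx_def by auto
  have eq: "Q [g, h] - Q2 (Phi2 Q) [g, h] =
     (Q [g, h] - (dX g * Q [varX, h] + dY g * Q [varY, h] + dZ g * Q [varZ, h]))
     + dX g * (Q [varX, h] - (dX h * xx + dY h * xy + dZ h * xz))
     + dY g * (Q [varY, h] - (dX h * yx + dY h * yy + dZ h * yz))
     + dZ g * (Q [varZ, h] - (dX h * zx + dY h * zy + dZ h * zz))
     + dX g * dX h * xx + dY g * dY h * yy + dZ g * dZ h * zz
     + dZ g * dY h * p1 + dX g * dZ h * p2 + dY g * dX h * p3"
    unfolding Q2_def Phi2_def dot_def cross_def grad_def xx_def yy_def zz_def xy_def yx_def
      xz_def zx_def yz_def zy_def p1_def p2_def p3_def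
    by (simp add: algebra_simps)
  show ?thesis unfolding eq
    using c0 c1[of varX] c1[of varY] c1[of varZ] rp[of varX] rp[of varY] rp[of varZ]
      P1
    unfolding xx_def yy_def zz_def xy_def yx_def xz_def zx_def yz_def zy_def
    by (simp add: in_ideal_add in_ideal_multl)
qed



lemma len1: "length fs = 1 \<Longrightarrow> \<exists>a. fs = [a]"
  by (auto simp: length_Suc_conv)
lemma len2: "length fs = 2 \<Longrightarrow> \<exists>a b. fs = [a, b]"
  by (auto simp: numeral_2_eq_2 length_Suc_conv)
lemma len3: "length fs = 3 \<Longrightarrow> \<exists>a b c. fs = [a, b, c]"
  by (auto simp: numeral_3_eq_3 length_Suc_conv)

lemma ex_from: "in_ideal \<phi> (A - S) \<Longrightarrow> in_ideal \<phi> A \<Longrightarrow> in_ideal \<phi> S"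
  using in_ideal_diff[of \<phi> A "A - S"] by simp
lemma pos1: "in_ideal \<phi> (x + b + c) \<Longrightarrow> in_ideal \<phi> b \<Longrightarrow> in_ideal \<phi> c \<Longrightarrow> in_ideal \<phi> x"
  using in_ideal_diff[OF in_ideal_diff, of \<phi> "x + b + c" b c] by simp
lemma pos2: "in_ideal \<phi> (b + x + c) \<Longrightarrow> in_ideal \<phi> b \<Longrightarrow> in_ideal \<phi> c \<Longrightarrow> in_ideal \<phi> x"
  using in_ideal_diff[OF in_ideal_diff, of \<phi> "b + x + c" b c] by simp
lemma pos3: "in_ideal \<phi> (b + c + x) \<Longrightarrow> in_ideal \<phi> b \<Longrightarrow> in_ideal \<phi> c \<Longrightarrow> in_ideal \<phi> x"
  using in_ideal_diff[OF in_ideal_diff, of \<phi> "b + c + x" b c] by simp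

lemma sd3_vanish:
  fixes \<phi> :: "'a::field_char_0 mpoly"
  assumes wh: "whis w1 w2 w3 \<phi>" and Q: "skew_derivation \<phi> 3 Q"
  shows "in_ideal \<phi> (Q [g, h, k])"
proof -
  have s0: "slotder \<phi> (\<lambda>g. Q [g, h, k])" for h k
    using sd_slot[OF Q, of "[0, h, k]" 0] by simp
  have s1: "slotder \<phi> (\<lambda>h. Q [g, h, k])" for g k
    using sd_slot[OF Q, of "[g, 0, k]" 1] by simp
  have s2: "slotder \<phi> (\<lambda>k. Q [g, h, k])" for g h
    using sd_slot[OF Q, of "[g, h, 0]" 2] by simp
  have r01: "in_ideal \<phi> (Q [a, a, c])" for a c
    using sd_rep[OF Q, of "[a, a, c]" 0 1] by simp
  have r02: "in_ideal \<phi> (Q [a, b, a])" for a b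
    using sd_rep[OF Q, of "[a, b, a]" 0 2] by simp
  have r12: "in_ideal \<phi> (Q [a, b, b])" for a b
    using sd_rep[OF Q, of "[a, b, b]" 1 2] by simp
  have w01: "in_ideal \<phi> (Q [b, a, c] + Q [a, b, c])" for a b c
    using sd_swap[OF Q, of "[a, b, c]" 0 1] by simp
  have w02: "in_ideal \<phi> (Q [c, b, a] + Q [a, b, c])" for a b c
    using sd_swap[OF Q, of "[a, b, c]" 0 2] by simp
  have w12: "in_ideal \<phi> (Q [a, c, b] + Q [a, b, c])" for a b c
    using sd_swap[OF Q, of "[a, b, c]" 1 2] by simp
  have fromswap: "in_ideal \<phi> u" if "in_ideal \<phi> (u + v)" "in_ideal \<phi> v" for u v
    using in_ideal_diff[OF that] by simp
  define q where "q = Q [varX, varY, varZ]"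
  have z0: "in_ideal \<phi> (Q [0, varY, varZ])"
    using sd_zero_arg[OF Q, of "[varX, varY, varZ]" 0] by simp
  have z1: "in_ideal \<phi> (Q [varX, 0, varZ])"
    using sd_zero_arg[OF Q, of "[varX, varY, varZ]" 1] by simp
  have z2: "in_ideal \<phi> (Q [varX, varY, 0])"
    using sd_zero_arg[OF Q, of "[varX, varY, varZ]" 2] by simp
  have ph: "in_ideal \<phi> (\<phi> - 0)" using in_ideal_self[of \<phi> 1] by simp
  have less3: "i < 3 \<Longrightarrow> i = 0 \<or> i = 1 \<or> i = (2::nat)" for i by auto
  have e0: "in_ideal \<phi> (Q [\<phi>, varY, varZ] - Q [0, varY, varZ])"
    by (rule sd_wd[OF Q]) (use ph in \<open>auto simp: numeral_3_eq_3 less_Suc_eq\<close>)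
  have e1: "in_ideal \<phi> (Q [varX, \<phi>, varZ] - Q [varX, 0, varZ])"
    by (rule sd_wd[OF Q]) (use ph in \<open>auto simp: numeral_3_eq_3 less_Suc_eq\<close>)
  have e2: "in_ideal \<phi> (Q [varX, varY, \<phi>] - Q [varX, varY, 0])"
    by (rule sd_wd[OF Q]) (use ph in \<open>auto simp: numeral_3_eq_3 less_Suc_eq\<close>)
  have p0: "in_ideal \<phi> (Q [\<phi>, varY, varZ])" using e0 z0 by (metis diff_add_cancel in_ideal_add)
  have p1: "in_ideal \<phi> (Q [varX, \<phi>, varZ])" using e1 z1 by (metis diff_add_cancel in_ideal_add)
  have p2: "in_ideal \<phi> (Q [varX, varY, \<phi>])" using e2 z2 by (metis diff_add_cancel in_ideal_add)
  have c0: "in_ideal \<phi> (Q [\<phi>, varY, varZ] - (dX \<phi> * q + dY \<phi> * Q [varY, varY, varZ] + dZ \<phi> * Q [varZ, varY, varZ]))"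
    using slotder_chain[OF s0[of varY varZ], of \<phi>] unfolding q_def by simp
  have c1: "in_ideal \<phi> (Q [varX, \<phi>, varZ] - (dX \<phi> * Q [varX, varX, varZ] + dY \<phi> * q + dZ \<phi> * Q [varX, varZ, varZ]))"
    using slotder_chain[OF s1[of varX varZ], of \<phi>] unfolding q_def by simp
  have c2: "in_ideal \<phi> (Q [varX, varY, \<phi>] - (dX \<phi> * Q [varX, varY, varX] + dY \<phi> * Q [varX, varY, varY] + dZ \<phi> * q))"
    using slotder_chain[OF s2[of varX varY], of \<phi>] unfolding q_def by simp
  have eqx: "dX \<phi> * q = Q [\<phi>, varY, varZ] - (Q [\<phi>, varY, varZ] - (dX \<phi> * q + dY \<phi> * Q [varY, varY, varZ] + dZ \<phi> * Q [varZ, varY, varZ])) - dY \<phi> * Q [varY, varY, varZ] - dZ \<phi> * Q [varZ, varY, varZ]"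
    by (simp add: algebra_simps)
  have eqy: "dY \<phi> * q = Q [varX, \<phi>, varZ] - (Q [varX, \<phi>, varZ] - (dX \<phi> * Q [varX, varX, varZ] + dY \<phi> * q + dZ \<phi> * Q [varX, varZ, varZ])) - dX \<phi> * Q [varX, varX, varZ] - dZ \<phi> * Q [varX, varZ, varZ]"
    by (simp add: algebra_simps)
  have eqz: "dZ \<phi> * q = Q [varX, varY, \<phi>] - (Q [varX, varY, \<phi>] - (dX \<phi> * Q [varX, varY, varX] + dY \<phi> * Q [varX, varY, varY] + dZ \<phi> * q)) - dX \<phi> * Q [varX, varY, varX] - dY \<phi> * Q [varX, varY, varY]"
    by (simp add: algebra_simps)
  have qx: "in_ideal \<phi> (dX \<phi> * q)"
    using ex_from[OF c0 p0] in_ideal_multl[OF r01] in_ideal_multl[OF r02] by (rule pos1)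
  have qy: "in_ideal \<phi> (dY \<phi> * q)"
    using ex_from[OF c1 p1] in_ideal_multl[OF r01] in_ideal_multl[OF r12] by (rule pos2)
  have qz: "in_ideal \<phi> (dZ \<phi> * q)"
    using ex_from[OF c2 p2] in_ideal_multl[OF r02] in_ideal_multl[OF r12] by (rule pos3)
  have q0: "in_ideal \<phi> q" by (rule key_lemma[OF wh qx qy qz])
  have pm1: "in_ideal \<phi> (Q [varY, varX, varZ])" using fromswap[OF w01 q0[unfolded q_def]] .
  have pm2: "in_ideal \<phi> (Q [varZ, varY, varX])" using fromswap[OF w02 q0[unfolded q_def]] .
  have pm3: "in_ideal \<phi> (Q [varX, varZ, varY])" using fromswap[OF w12 q0[unfolded q_def]] .
  have pm4: "in_ideal \<phi> (Q [varY, varZ, varX])" using fromswap[OF w01 pm2] .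
  have pm5: "in_ideal \<phi> (Q [varZ, varX, varY])" using fromswap[OF w01 pm3] .
  note pms = q0[unfolded q_def] pm1 pm2 pm3 pm4 pm5
  have base: "in_ideal \<phi> (Q [a, b, c])" if "a \<in> {varX, varY, varZ}" "b \<in> {varX, varY, varZ}" "c \<in> {varX, varY, varZ}" for a b c
    using that pms r01 r02 r12 by auto
  have st2: "in_ideal \<phi> (Q [a, b, k])" if "a \<in> {varX, varY, varZ}" "b \<in> {varX, varY, varZ}" for a b k
    by (rule slotder_zero[OF s2]) (use base that in auto)
  have st1: "in_ideal \<phi> (Q [a, h, k])" if "a \<in> {varX, varY, varZ}" for a h k
    by (rule slotder_zero[OF s1]) (use st2 that in auto)
  show ?thesis
    by (rule slotder_zero[OF s0]) (use st1 in auto)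
qed



lemma vin_dot: "vin_ideal \<phi> v \<Longrightarrow> in_ideal \<phi> (dot u v)"
  by (cases u; cases v) (auto simp: vin_ideal_def dot_def intro!: in_ideal_add in_ideal_multl)

lemma dot_grad_lin: "dot (grad (mconst a * g + mconst b * h)) F = mconst a * dot (grad g) F + mconst b * dot (grad h) F"
  by (cases F) (simp add: dot_def grad_def dsimps algebra_simps)
lemma dot_grad_mult: "dot (grad (g * h)) F = g * dot (grad h) F + h * dot (grad g) F"
  by (cases F) (simp add: dot_def grad_def dsimps algebra_simps)
lemma dot_grad_phimult: "dot (grad (g + \<phi> * h)) F - dot (grad g) F = h * dot F (grad \<phi>) + \<phi> * dot (grad h) F"
  by (cases F) (simp add: dot_def grad_def dsimps algebra_simps)

lemma Q1_simp [simp]: "Q1 F [g] = dot (grad g) F" by (simp add: Q1_def)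
lemma Q2_simp [simp]: "Q2 F [g, h] = dot (cross (grad g) (grad h)) F" by (simp add: Q2_def)

lemma Q1_sd:
  assumes F: "in_ideal \<phi> (dot F (grad \<phi>))"
  shows "skew_derivation \<phi> 1 (Q1 F)"
  unfolding skew_derivation_def
proof (intro conjI allI impI)
  fix fs gs :: "'a mpoly list"
  assume l: "length fs = 1" "length gs = 1" and d: "\<forall>i<1. in_ideal \<phi> (fs ! i - gs ! i)"
  obtain f where f: "fs = [f]" using len1[OF l(1)] ..
  obtain g where g: "gs = [g]" using len1[OF l(2)] ..
  have "in_ideal \<phi> (f - g)" using d f g by auto
  then obtain h where "f - g = \<phi> * h" unfolding in_ideal_def by blast
  then have fg: "f = g + \<phi> * h" by (simp add: algebra_simps)
  show "in_ideal \<phi> (Q1 F fs - Q1 F gs)"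
    unfolding f g fg using dot_grad_phimult[of g \<phi> h F] F
    by (simp add: in_ideal_add in_ideal_multl)
next
  fix fs :: "'a mpoly list" and i :: nat and g h a b
  assume l: "length fs = 1" "i < 1"
  then obtain f where f: "fs = [f]" "i = 0" using len1[OF l(1)] by auto
  show "in_ideal \<phi> (Q1 F (fs[i := mconst a * g + mconst b * h]) - (mconst a * Q1 F (fs[i := g]) + mconst b * Q1 F (fs[i := h])))"
    unfolding f by (simp add: dot_grad_lin)
next
  fix fs :: "'a mpoly list" and i :: nat and g h
  assume l: "length fs = 1" "i < 1"
  then obtain f where f: "fs = [f]" "i = 0" using len1[OF l(1)] by auto
  show "in_ideal \<phi> (Q1 F (fs[i := g * h]) - (g * Q1 F (fs[i := h]) + h * Q1 F (fs[i := g])))"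
    unfolding f by (simp add: dot_grad_mult)
next
  fix fs :: "'a mpoly list" and i j :: nat
  assume "length fs = 1" "i < j" "j < 1"
  then show "in_ideal \<phi> (Q1 F (fs[i := fs ! j, j := fs ! i]) + Q1 F fs)" by simp
qed

lemma Q2_lin0: "dot (cross (grad (mconst a * g + mconst b * h)) (grad k)) F = mconst a * dot (cross (grad g) (grad k)) F + mconst b * dot (cross (grad h) (grad k)) F"
  by (cases F) (simp add: dot_def cross_def grad_def dsimps algebra_simps)
lemma Q2_lin1: "dot (cross (grad k) (grad (mconst a * g + mconst b * h))) F = mconst a * dot (cross (grad k) (grad g)) F + mconst b * dot (cross (grad k) (grad h)) F"
  by (cases F) (simp add: dot_def cross_def grad_def dsimps algebra_simps)
lemma Q2_mult0: "dot (cross (grad (g * h)) (grad k)) F = g * dot (cross (grad h) (grad k)) F + h * dot (cross (grad g) (grad k)) F"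
  by (cases F) (simp add: dot_def cross_def grad_def dsimps algebra_simps)
lemma Q2_mult1: "dot (cross (grad k) (grad (g * h))) F = g * dot (cross (grad k) (grad h)) F + h * dot (cross (grad k) (grad g)) F"
  by (cases F) (simp add: dot_def cross_def grad_def dsimps algebra_simps)
lemma Q2_skew: "dot (cross (grad h) (grad g)) F + dot (cross (grad g) (grad h)) F = 0"
  by (cases F) (simp add: dot_def cross_def grad_def algebra_simps)
lemma Q2_phi0: "dot (cross (grad (a + \<phi> * h)) (grad b)) F - dot (cross (grad a) (grad b)) F
   = \<phi> * dot (cross (grad h) (grad b)) F + h * dot (grad b) (cross F (grad \<phi>))"
  by (cases F) (simp add: dot_def cross_def grad_def dsimps algebra_simps)
lemma Q2_phi1: "dot (cross (grad a) (grad (b + \<phi> * k))) F - dot (cross (grad a) (grad b)) F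
   = \<phi> * dot (cross (grad a) (grad k)) F - k * dot (grad a) (cross F (grad \<phi>))"
  by (cases F) (simp add: dot_def cross_def grad_def dsimps algebra_simps)

lemma less2: "(i::nat) < 2 \<Longrightarrow> i = 0 \<or> i = 1" by auto

lemma Q2_sd:
  assumes F: "vin_ideal \<phi> (cross F (grad \<phi>))"
  shows "skew_derivation \<phi> 2 (Q2 F)"
  unfolding skew_derivation_def
proof (intro conjI allI impI)
  fix fs gs :: "'a mpoly list"
  assume l: "length fs = 2" "length gs = 2" and d: "\<forall>i<2. in_ideal \<phi> (fs ! i - gs ! i)"
  obtain f1 f2 where f: "fs = [f1, f2]" using len2[OF l(1)] by blast
  obtain g1 g2 where g: "gs = [g1, g2]" using len2[OF l(2)] by blast
  have "in_ideal \<phi> (f1 - g1)" "in_ideal \<phi> (f2 - g2)" using d[rule_format, of 0] d[rule_format, of 1] f g by simp_all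
  then obtain h k where "f1 - g1 = \<phi> * h" "f2 - g2 = \<phi> * k" unfolding in_ideal_def by blast
  then have fg: "f1 = g1 + \<phi> * h" "f2 = g2 + \<phi> * k" by (simp_all add: algebra_simps)
  have e: "Q2 F fs - Q2 F gs =
     (dot (cross (grad (g1 + \<phi> * h)) (grad (g2 + \<phi> * k))) F - dot (cross (grad g1) (grad (g2 + \<phi> * k))) F)
     + (dot (cross (grad g1) (grad (g2 + \<phi> * k))) F - dot (cross (grad g1) (grad g2)) F)"
    unfolding f g fg by simp
  show "in_ideal \<phi> (Q2 F fs - Q2 F gs)"
    unfolding e Q2_phi0 Q2_phi1 using vin_dot[OF F]
    by (simp add: in_ideal_add in_ideal_multl in_ideal_diff)
next
  fix fs :: "'a mpoly list" and i :: nat and g h a b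
  assume l: "length fs = 2" "i < 2"
  obtain f1 f2 where f: "fs = [f1, f2]" using len2[OF l(1)] by blast
  show "in_ideal \<phi> (Q2 F (fs[i := mconst a * g + mconst b * h]) - (mconst a * Q2 F (fs[i := g]) + mconst b * Q2 F (fs[i := h])))"
    using less2[OF l(2)] unfolding f by (auto simp: Q2_lin0 Q2_lin1)
next
  fix fs :: "'a mpoly list" and i :: nat and g h
  assume l: "length fs = 2" "i < 2"
  obtain f1 f2 where f: "fs = [f1, f2]" using len2[OF l(1)] by blast
  show "in_ideal \<phi> (Q2 F (fs[i := g * h]) - (g * Q2 F (fs[i := h]) + h * Q2 F (fs[i := g])))"
    using less2[OF l(2)] unfolding f by (auto simp: Q2_mult0 Q2_mult1)
next
  fix fs :: "'a mpoly list" and i j :: nat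
  assume l: "length fs = 2" "i < j" "j < 2"
  obtain f1 f2 where f: "fs = [f1, f2]" using len2[OF l(1)] by blast
  have "i = 0" "j = 1" using l by auto
  then show "in_ideal \<phi> (Q2 F (fs[i := fs ! j, j := fs ! i]) + Q2 F fs)"
    unfolding f by (simp add: Q2_skew)
qed



lemma cob1: "cobound \<phi> Q [g] = pb \<phi> g (Q [])"
  by (simp add: cobound_def del_def)

lemma cob2: "cobound \<phi> Q [g, h] = pb \<phi> g (Q [h]) - pb \<phi> h (Q [g]) - Q [pb \<phi> g h]"
  by (simp add: cobound_def del_def numeral_2_eq_2 lessThan_Suc algebra_simps)

lemma cob3: "cobound \<phi> Q [g, h, k] = pb \<phi> g (Q [h, k]) - pb \<phi> h (Q [g, k]) + pb \<phi> k (Q [g, h])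
     - Q [pb \<phi> g h, k] + Q [pb \<phi> g k, h] - Q [pb \<phi> h k, g]"
  by (simp add: cobound_def del_def numeral_3_eq_3 lessThan_Suc algebra_simps)

lemma pb_diff: "pb \<phi> g u - pb \<phi> g u' = pb \<phi> g (u - u')"
  by (simp add: pb_def dot_def cross_def grad_def dsimps algebra_simps)

lemma pb_phimult: "pb \<phi> g (\<phi> * h) = \<phi> * pb \<phi> g h"
  by (simp add: pb_def dot_def cross_def grad_def dsimps algebra_simps)

lemma pb_cong: "in_ideal \<phi> (u - u') \<Longrightarrow> in_ideal \<phi> (pb \<phi> g u - pb \<phi> g u')"
  unfolding pb_diff in_ideal_def by (auto simp: pb_phimult)

lemma pb_zero [simp]: "pb \<phi> g 0 = 0"
  by (simp add: pb_def dot_def cross_def grad_def dX_0 dY_0 dZ_0)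

definition wv :: "'a::idom mpoly \<Rightarrow> 'a vec3 \<Rightarrow> 'a vec3" where
  "wv \<phi> F = - grad (dot F (grad \<phi>)) + vsmult (Div F) (grad \<phi>)"

lemma H1_cob: "cobound \<phi> (Q1 F) [g, h] = Q2 (wv \<phi> F) [g, h]"
proof -
  obtain F1 F2 F3 where F: "F = (F1, F2, F3)" by (cases F) blast
  show ?thesis unfolding cob2 Q1_simp Q2_simp wv_def F by (rule H1_identity)
qed

definition Tc :: "'a::idom mpoly \<Rightarrow> 'a vec3 \<Rightarrow> 'a mpoly" where
  "Tc \<phi> F = (case F of (F1, F2, F3) \<Rightarrow>
     dX \<phi> * (dY F3 - dZ F2) + dY \<phi> * (dZ F1 - dX F3) + dZ \<phi> * (dX F2 - dY F1))"

lemma H2_cob: "cobound \<phi> (Q2 F) [g, h, k] = - dot (grad g) (cross (grad h) (grad k)) * Tc \<phi> F"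
proof -
  obtain F1 F2 F3 where F: "F = (F1, F2, F3)" by (cases F) blast
  show ?thesis unfolding cob3 Q2_simp Tc_def F by (simp add: H2_identity)
qed

lemma Tc_ideal:
  assumes F: "vin_ideal \<phi> (cross F (grad \<phi>))" and phi0: "\<phi> \<noteq> 0"
  shows "in_ideal \<phi> (Tc \<phi> F)"
proof -
  obtain F1 F2 F3 where Fd: "F = (F1, F2, F3)" by (cases F) blast
  from F obtain G1 G2 G3 where G: "F2 * dZ \<phi> - F3 * dY \<phi> = \<phi> * G1" "F3 * dX \<phi> - F1 * dZ \<phi> = \<phi> * G2"
      "F1 * dY \<phi> - F2 * dX \<phi> = \<phi> * G3"
    unfolding vin_ideal_def in_ideal_def Fd cross_def grad_def by auto
  have i1: "Tc \<phi> F = dX (F2 * dZ \<phi> - F3 * dY \<phi>) + dY (F3 * dX \<phi> - F1 * dZ \<phi>) + dZ (F1 * dY \<phi> - F2 * dX \<phi>)"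
    unfolding Tc_def Fd by (simp add: dsimps algebra_simps)
  have i2: "dX \<phi> * (F2 * dZ \<phi> - F3 * dY \<phi>) + dY \<phi> * (F3 * dX \<phi> - F1 * dZ \<phi>) + dZ \<phi> * (F1 * dY \<phi> - F2 * dX \<phi>) = 0"
    by (simp add: algebra_simps)
  have "\<phi> * (dX \<phi> * G1 + dY \<phi> * G2 + dZ \<phi> * G3) = 0"
    using i2 unfolding G by (simp add: algebra_simps)
  then have z: "dX \<phi> * G1 + dY \<phi> * G2 + dZ \<phi> * G3 = 0" using phi0 by simp
  have "Tc \<phi> F = \<phi> * (dX G1 + dY G2 + dZ G3) + (dX \<phi> * G1 + dY \<phi> * G2 + dZ \<phi> * G3)"
    unfolding i1 G by (simp add: dsimps algebra_simps)
  then have "Tc \<phi> F = \<phi> * (dX G1 + dY G2 + dZ G3)" using z by simp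
  then show ?thesis by simp
qed

lemma Phi1_Q1 [simp]: "Phi1 (Q1 F) = F"
  by (cases F) (simp add: Phi1_def dot_def grad_def)

lemma Phi2_Q2 [simp]: "Phi2 (Q2 F) = F"
  by (cases F) (simp add: Phi2_def dot_def cross_def grad_def)

lemma Q2_vin: "vin_ideal \<phi> F \<Longrightarrow> in_ideal \<phi> (Q2 F [g, h])"
  by (simp add: vin_dot)

lemma Q2_diff: "Q2 F [g, h] - Q2 G [g, h] = Q2 (F - G) [g, h]"
  by (cases F; cases G) (simp add: dot_def cross_def grad_def algebra_simps)

lemma Q1_diff: "Q1 F [g] - Q1 G [g] = Q1 (F - G) [g]"
  by (cases F; cases G) (simp add: dot_def grad_def algebra_simps)

lemma Q1_vin: "vin_ideal \<phi> F \<Longrightarrow> in_ideal \<phi> (Q1 F [g])"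
  by (simp add: vin_dot)



lemma dot_comm: "dot a b = dot b a"
  by (cases a; cases b) (simp add: dot_def algebra_simps)

lemma vin_ideal_diff_self [simp]: "vin_ideal \<phi> (a - a)" by simp

lemma der1_dot:
  assumes Q: "skew_derivation \<phi> 1 Q"
  shows "in_ideal \<phi> (dot (Phi1 Q) (grad \<phi>))"
proof -
  have a: "in_ideal \<phi> (Q [\<phi>] - Q [0])"
    by (rule sd_wd[OF Q]) (auto simp: in_ideal_def intro: exI[of _ 1])
  have b: "in_ideal \<phi> (Q [0])" using sd_zero_arg[OF Q, of "[0]" 0] by simp
  have c: "in_ideal \<phi> (Q [\<phi>] - Q1 (Phi1 Q) [\<phi>])" by (rule chain1[OF Q])
  have "in_ideal \<phi> (Q1 (Phi1 Q) [\<phi>])"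
    using in_ideal_diff[OF in_ideal_add[OF a b] c] by simp
  then show ?thesis by (simp add: dot_comm)
qed

lemma der2_cross:
  fixes Q :: "'a::field_char_0 mpoly list \<Rightarrow> 'a mpoly"
  assumes Q: "skew_derivation \<phi> 2 Q"
  shows "vin_ideal \<phi> (cross (Phi2 Q) (grad \<phi>))"
proof -
  have z: "in_ideal \<phi> (Q2 (Phi2 Q) [\<phi>, v])" for v
  proof -
    have a: "in_ideal \<phi> (Q [\<phi>, v] - Q [0, v])"
      by (rule sd_wd[OF Q]) (auto simp: in_ideal_def numeral_2_eq_2 less_Suc_eq intro: exI[of _ 1])
    have b: "in_ideal \<phi> (Q [0, v])" using sd_zero_arg[OF Q, of "[v, v]" 0] by simp
    have c: "in_ideal \<phi> (Q [\<phi>, v] - Q2 (Phi2 Q) [\<phi>, v])" by (rule chain2[OF Q])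
    show ?thesis using in_ideal_diff[OF in_ideal_add[OF a b] c] by simp
  qed
  obtain F1 F2 F3 where F: "Phi2 Q = (F1, F2, F3)" by (cases "Phi2 Q") blast
  show ?thesis using z[of varX] z[of varY] z[of varZ] unfolding F
    by (simp add: vin_ideal_def cross_def dot_def grad_def algebra_simps)
qed

lemma uniq1:
  assumes Q: "skew_derivation \<phi> 1 Q" and Q': "skew_derivation \<phi> 1 Q'"
    and d: "vin_ideal \<phi> (Phi1 Q - Phi1 Q')"
  shows "in_ideal \<phi> (Q [g] - Q' [g])"
proof -
  have "Q [g] - Q' [g] = (Q [g] - Q1 (Phi1 Q) [g]) - (Q' [g] - Q1 (Phi1 Q') [g]) + Q1 (Phi1 Q - Phi1 Q') [g]"
    by (simp only: Q1_diff[symmetric]) (simp add: algebra_simps)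
  then show ?thesis using chain1[OF Q] chain1[OF Q'] Q1_vin[OF d]
    by (metis in_ideal_add in_ideal_diff)
qed

lemma uniq2:
  fixes Q :: "'a::field_char_0 mpoly list \<Rightarrow> 'a mpoly"
  assumes Q: "skew_derivation \<phi> 2 Q" and Q': "skew_derivation \<phi> 2 Q'"
    and d: "vin_ideal \<phi> (Phi2 Q - Phi2 Q')"
  shows "in_ideal \<phi> (Q [g, h] - Q' [g, h])"
proof -
  have "Q [g, h] - Q' [g, h] = (Q [g, h] - Q2 (Phi2 Q) [g, h]) - (Q' [g, h] - Q2 (Phi2 Q') [g, h]) + Q2 (Phi2 Q - Phi2 Q') [g, h]"
    by (simp only: Q2_diff[symmetric]) simp
  then show ?thesis using chain2[OF Q] chain2[OF Q'] Q2_vin[OF d]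
    by (metis in_ideal_add in_ideal_diff)
qed

lemma cob1_cong:
  assumes Q: "skew_derivation \<phi> 1 Q"
  shows "in_ideal \<phi> (cobound \<phi> Q [g, h] - cobound \<phi> (Q1 (Phi1 Q)) [g, h])"
proof -
  let ?P = "Q1 (Phi1 Q)"
  have "cobound \<phi> Q [g, h] - cobound \<phi> ?P [g, h] =
    (pb \<phi> g (Q [h]) - pb \<phi> g (?P [h])) - (pb \<phi> h (Q [g]) - pb \<phi> h (?P [g])) - (Q [pb \<phi> g h] - ?P [pb \<phi> g h])"
    unfolding cob2 by (simp add: algebra_simps)
  then show ?thesis using pb_cong[OF chain1[OF Q]] chain1[OF Q]
    by (metis in_ideal_diff)
qed

lemma cob2_cong:
  fixes Q :: "'a::field_char_0 mpoly list \<Rightarrow> 'a mpoly"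
  assumes Q: "skew_derivation \<phi> 2 Q"
  shows "in_ideal \<phi> (cobound \<phi> Q [g, h, k] - cobound \<phi> (Q2 (Phi2 Q)) [g, h, k])"
proof -
  let ?P = "Q2 (Phi2 Q)"
  have "cobound \<phi> Q [g, h, k] - cobound \<phi> ?P [g, h, k] =
    (pb \<phi> g (Q [h, k]) - pb \<phi> g (?P [h, k])) - (pb \<phi> h (Q [g, k]) - pb \<phi> h (?P [g, k]))
     + (pb \<phi> k (Q [g, h]) - pb \<phi> k (?P [g, h]))
     - (Q [pb \<phi> g h, k] - ?P [pb \<phi> g h, k]) + (Q [pb \<phi> g k, h] - ?P [pb \<phi> g k, h])
     - (Q [pb \<phi> h k, g] - ?P [pb \<phi> h k, g])"
    unfolding cob3 by (simp add: algebra_simps)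
  then show ?thesis using pb_cong[OF chain2[OF Q]] chain2[OF Q]
    by (metis in_ideal_diff in_ideal_add)
qed

lemma Q2_basis: "Q2 W [varY, varZ] = fst W" "Q2 W [varZ, varX] = fst (snd W)" "Q2 W [varX, varY] = snd (snd W)"
  by (cases W; simp add: dot_def cross_def grad_def)+

lemma Q1_basis: "Q1 W [varX] = fst W" "Q1 W [varY] = fst (snd W)" "Q1 W [varZ] = snd (snd W)"
  by (cases W; simp add: dot_def grad_def)+

lemma cocycle1:
  assumes Q: "skew_derivation \<phi> 1 Q"
  shows "Q \<in> cocycles \<phi> 1 \<longleftrightarrow> vin_ideal \<phi> (wv \<phi> (Phi1 Q))"
proof
  assume "Q \<in> cocycles \<phi> 1"
  then have c: "in_ideal \<phi> (cobound \<phi> Q [g, h])" for g h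
    unfolding cocycles_def by auto
  have "in_ideal \<phi> (Q2 (wv \<phi> (Phi1 Q)) [g, h])" for g h
    using in_ideal_diff[OF c[of g h] cob1_cong[OF Q, of g h]] by (simp add: H1_cob)
  from this[of varY varZ] this[of varZ varX] this[of varX varY]
  show "vin_ideal \<phi> (wv \<phi> (Phi1 Q))" unfolding Q2_basis vin_ideal_def by simp
next
  assume w: "vin_ideal \<phi> (wv \<phi> (Phi1 Q))"
  have "in_ideal \<phi> (cobound \<phi> Q fs)" if l: "length fs = 2" for fs
  proof -
    obtain g h where fs: "fs = [g, h]" using len2[OF l] by blast
    have "in_ideal \<phi> (cobound \<phi> (Q1 (Phi1 Q)) [g, h])"
      unfolding H1_cob by (rule Q2_vin[OF w])
    then show ?thesis unfolding fs using cob1_cong[OF Q, of g h]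
      by (metis diff_add_cancel in_ideal_add)
  qed
  then show "Q \<in> cocycles \<phi> 1" unfolding cocycles_def using Q by simp
qed

lemma cocycle2:
  fixes Q :: "'a::field_char_0 mpoly list \<Rightarrow> 'a mpoly"
  assumes wh: "whis w1 w2 w3 \<phi>" and Q: "skew_derivation \<phi> 2 Q"
  shows "Q \<in> cocycles \<phi> 2"
proof -
  have "in_ideal \<phi> (cobound \<phi> Q fs)" if l: "length fs = 3" for fs
  proof -
    obtain g h k where fs: "fs = [g, h, k]" using len3[OF l] by blast
    have T: "in_ideal \<phi> (Tc \<phi> (Phi2 Q))"
      by (rule Tc_ideal[OF der2_cross[OF Q] whis_nonzero[OF wh]])
    have "in_ideal \<phi> (cobound \<phi> (Q2 (Phi2 Q)) [g, h, k])"
      unfolding H2_cob using T by (simp add: in_ideal_multl)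
    then show ?thesis unfolding fs using cob2_cong[OF Q, of g h k]
      by (metis diff_add_cancel in_ideal_add)
  qed
  then show ?thesis unfolding cocycles_def using Q by (simp add: numeral_3_eq_3)
qed



lemma sd0_all: "skew_derivation \<phi> 0 Q"
  by (simp add: skew_derivation_def)

lemma grad_0 [simp]: "grad 0 = 0"
  by (simp add: grad_def dX_0 dY_0 dZ_0 zero_prod_def)
lemma cross_0 [simp]: "cross 0 v = 0"
  by (cases v) (simp add: cross_def zero_prod_def)
lemma dot_0 [simp]: "dot 0 v = 0"
  by (cases v) (simp add: dot_def zero_prod_def)
lemma Div_0 [simp]: "Div 0 = 0"
  by (simp add: Div_def zero_prod_def dX_0 dY_0 dZ_0)
lemma vsmult_0 [simp]: "vsmult 0 v = 0"
  by (cases v) (simp add: vsmult_def zero_prod_def)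
lemma wv_0 [simp]: "wv \<phi> 0 = 0"
  by (simp add: wv_def)

lemma pb_basis: "cross (grad p) (grad \<phi>) = (pb \<phi> varX p, pb \<phi> varY p, pb \<phi> varZ p)"
  by (simp add: pb_def dot_def cross_def grad_def)

lemma vin_ideal_comp: "vin_ideal \<phi> (a1, a2, a3) \<longleftrightarrow> in_ideal \<phi> a1 \<and> in_ideal \<phi> a2 \<and> in_ideal \<phi> a3"
  by (simp add: vin_ideal_def)

lemma cocycle0: "Q \<in> cocycles \<phi> 0 \<longleftrightarrow> (\<forall>g. in_ideal \<phi> (pb \<phi> g (Q [])))"
proof
  assume "Q \<in> cocycles \<phi> 0"
  then show "\<forall>g. in_ideal \<phi> (pb \<phi> g (Q []))" unfolding cocycles_def by (auto simp: cob1[symmetric])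
next
  assume a: "\<forall>g. in_ideal \<phi> (pb \<phi> g (Q []))"
  have "in_ideal \<phi> (cobound \<phi> Q fs)" if l: "length fs = 1" for fs
  proof -
    obtain g where "fs = [g]" using len1[OF l] by blast
    then show ?thesis using a by (simp add: cob1)
  qed
  then show "Q \<in> cocycles \<phi> 0" unfolding cocycles_def by (simp add: sd0_all)
qed

lemma H0_iso:
  "quot_iso (cocycles \<phi> 0) (coboundaries \<phi> 0) cochain_smult
        {g. \<exists>f. vin_ideal \<phi> (cross (grad f) (grad \<phi>)) \<and> in_ideal \<phi> (g - f)}
        {g. in_ideal \<phi> g}
        (\<lambda>c g. mconst c * g)"
  unfolding quot_iso_def
proof (rule exI[of _ "\<lambda>Q. Q []"], intro conjI)
  show "\<forall>z\<in>cocycles \<phi> 0. z [] \<in> {g. \<exists>f. vin_ideal \<phi> (cross (grad f) (grad \<phi>)) \<and> in_ideal \<phi> (g - f)}"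
  proof
    fix z assume "z \<in> cocycles \<phi> 0"
    then have "\<forall>g. in_ideal \<phi> (pb \<phi> g (z []))" by (simp add: cocycle0)
    then have "vin_ideal \<phi> (cross (grad (z [])) (grad \<phi>))" unfolding pb_basis vin_ideal_comp by simp
    then show "z [] \<in> {g. \<exists>f. vin_ideal \<phi> (cross (grad f) (grad \<phi>)) \<and> in_ideal \<phi> (g - f)}" by auto
  qed
  show "\<forall>z1\<in>cocycles \<phi> 0. \<forall>z2\<in>cocycles \<phi> 0. (z1 + z2) [] - (z1 [] + z2 []) \<in> {g. in_ideal \<phi> g}"
    by simp
  show "\<forall>c. \<forall>z\<in>cocycles \<phi> 0. cochain_smult c z [] - mconst c * z [] \<in> {g. in_ideal \<phi> g}"
    by (simp add: cochain_smult_def)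
  show "\<forall>v\<in>{g. \<exists>f. vin_ideal \<phi> (cross (grad f) (grad \<phi>)) \<and> in_ideal \<phi> (g - f)}.
          \<exists>z\<in>cocycles \<phi> 0. v - z [] \<in> {g. in_ideal \<phi> g}"
  proof
    fix v assume "v \<in> {g. \<exists>f. vin_ideal \<phi> (cross (grad f) (grad \<phi>)) \<and> in_ideal \<phi> (g - f)}"
    then obtain f where f: "vin_ideal \<phi> (cross (grad f) (grad \<phi>))" "in_ideal \<phi> (v - f)" by auto
    have "(\<lambda>_. f) \<in> cocycles \<phi> 0"
      unfolding cocycle0 pb_def using vin_dot[OF f(1)] by simp
    then show "\<exists>z\<in>cocycles \<phi> 0. v - z [] \<in> {g. in_ideal \<phi> g}" using f(2) by force
  qed
  show "\<forall>z\<in>cocycles \<phi> 0. (z [] \<in> {g. in_ideal \<phi> g}) = (z \<in> coboundaries \<phi> 0)"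
    by (simp add: coboundaries_def sd0_all)
qed

lemma H1_iso:
  "quot_iso (cocycles \<phi> 1) (coboundaries \<phi> 1) cochain_smult
        {g. \<exists>f. in_ideal \<phi> (dot f (grad \<phi>)) \<and>
               vin_ideal \<phi> (- grad (dot f (grad \<phi>)) + vsmult (Div f) (grad \<phi>)) \<and>
               vin_ideal \<phi> (g - f)}
        {g. \<exists>f. vin_ideal \<phi> (g - cross (grad f) (grad \<phi>))}
        (\<lambda>c g. vsmult (mconst c) g)"
  unfolding quot_iso_def wv_def[symmetric]
proof (rule exI[of _ Phi1], intro conjI)
  have W0: "0 \<in> {g. \<exists>f. vin_ideal \<phi> (g - cross (grad f) (grad \<phi>))}"
    by (auto intro!: exI[of _ 0])
  show "\<forall>z\<in>cocycles \<phi> 1. Phi1 z \<in> {g. \<exists>f. in_ideal \<phi> (dot f (grad \<phi>)) \<and> vin_ideal \<phi> (wv \<phi> f) \<and> vin_ideal \<phi> (g - f)}"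
  proof
    fix z assume z: "z \<in> cocycles \<phi> 1"
    then have sd: "skew_derivation \<phi> 1 z" unfolding cocycles_def by simp
    show "Phi1 z \<in> {g. \<exists>f. in_ideal \<phi> (dot f (grad \<phi>)) \<and> vin_ideal \<phi> (wv \<phi> f) \<and> vin_ideal \<phi> (g - f)}"
      using der1_dot[OF sd] cocycle1[OF sd] z by (intro CollectI exI[of _ "Phi1 z"]) simp
  qed
  show "\<forall>z1\<in>cocycles \<phi> 1. \<forall>z2\<in>cocycles \<phi> 1. Phi1 (z1 + z2) - (Phi1 z1 + Phi1 z2) \<in> {g. \<exists>f. vin_ideal \<phi> (g - cross (grad f) (grad \<phi>))}"
    using W0 by (simp add: Phi1_def)
  show "\<forall>c. \<forall>z\<in>cocycles \<phi> 1. Phi1 (cochain_smult c z) - vsmult (mconst c) (Phi1 z) \<in> {g. \<exists>f. vin_ideal \<phi> (g - cross (grad f) (grad \<phi>))}"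
    using W0 by (simp add: Phi1_def cochain_smult_def vsmult_def)
  show "\<forall>v\<in>{g. \<exists>f. in_ideal \<phi> (dot f (grad \<phi>)) \<and> vin_ideal \<phi> (wv \<phi> f) \<and> vin_ideal \<phi> (g - f)}.
          \<exists>z\<in>cocycles \<phi> 1. v - Phi1 z \<in> {g. \<exists>f. vin_ideal \<phi> (g - cross (grad f) (grad \<phi>))}"
  proof
    fix v assume "v \<in> {g. \<exists>f. in_ideal \<phi> (dot f (grad \<phi>)) \<and> vin_ideal \<phi> (wv \<phi> f) \<and> vin_ideal \<phi> (g - f)}"
    then obtain f where f: "in_ideal \<phi> (dot f (grad \<phi>))" "vin_ideal \<phi> (wv \<phi> f)" "vin_ideal \<phi> (v - f)" by auto
    have sd: "skew_derivation \<phi> 1 (Q1 f)" by (rule Q1_sd[OF f(1)])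
    have "Q1 f \<in> cocycles \<phi> 1" using cocycle1[OF sd] f(2) by simp
    moreover have "v - Phi1 (Q1 f) \<in> {g. \<exists>f. vin_ideal \<phi> (g - cross (grad f) (grad \<phi>))}"
      using f(3) by (auto intro!: exI[of _ 0])
    ultimately show "\<exists>z\<in>cocycles \<phi> 1. v - Phi1 z \<in> {g. \<exists>f. vin_ideal \<phi> (g - cross (grad f) (grad \<phi>))}" by blast
  qed
  show "\<forall>z\<in>cocycles \<phi> 1. (Phi1 z \<in> {g. \<exists>f. vin_ideal \<phi> (g - cross (grad f) (grad \<phi>))}) = (z \<in> coboundaries \<phi> 1)"
  proof
    fix z assume z: "z \<in> cocycles \<phi> 1"
    then have sd: "skew_derivation \<phi> 1 z" unfolding cocycles_def by simp
    show "(Phi1 z \<in> {g. \<exists>f. vin_ideal \<phi> (g - cross (grad f) (grad \<phi>))}) = (z \<in> coboundaries \<phi> 1)"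
    proof
      assume "Phi1 z \<in> {g. \<exists>f. vin_ideal \<phi> (g - cross (grad f) (grad \<phi>))}"
      then obtain p where p: "vin_ideal \<phi> (Phi1 z - cross (grad p) (grad \<phi>))" by auto
      have "in_ideal \<phi> (z fs - cobound \<phi> (\<lambda>_. p) fs)" if l: "length fs = 1" for fs
      proof -
        obtain g where fs: "fs = [g]" using len1[OF l] by blast
        have e: "z [g] - cobound \<phi> (\<lambda>_. p) [g] = (z [g] - Q1 (Phi1 z) [g]) + Q1 (Phi1 z - cross (grad p) (grad \<phi>)) [g]"
          by (simp only: Q1_diff[symmetric]) (simp add: cob1 pb_def)
        show ?thesis unfolding fs e using chain1[OF sd] Q1_vin[OF p] by (rule in_ideal_add)
      qed
      then show "z \<in> coboundaries \<phi> 1" unfolding coboundaries_def using sd sd0_all by auto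
    next
      assume "z \<in> coboundaries \<phi> 1"
      then obtain P where P: "\<And>fs. length fs = 1 \<Longrightarrow> in_ideal \<phi> (z fs - cobound \<phi> P fs)"
        unfolding coboundaries_def by auto
      have "in_ideal \<phi> (z [g] - pb \<phi> g (P []))" for g using P[of "[g]"] by (simp add: cob1)
      then have "vin_ideal \<phi> (Phi1 z - cross (grad (P [])) (grad \<phi>))"
        unfolding pb_basis by (simp add: Phi1_def vin_ideal_comp)
      then show "Phi1 z \<in> {g. \<exists>f. vin_ideal \<phi> (g - cross (grad f) (grad \<phi>))}" by blast
    qed
  qed
qed



lemma H2_iso:
  fixes \<phi> :: "'a::field_char_0 mpoly"
  assumes wh: "whis w1 w2 w3 \<phi>"
  shows "quot_iso (cocycles \<phi> 2) (coboundaries \<phi> 2) cochain_smult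
        {g. \<exists>f. vin_ideal \<phi> (cross f (grad \<phi>)) \<and> vin_ideal \<phi> (g - f)}
        {g. \<exists>f. in_ideal \<phi> (dot f (grad \<phi>)) \<and>
               vin_ideal \<phi> (g - (- grad (dot f (grad \<phi>)) + vsmult (Div f) (grad \<phi>)))}
        (\<lambda>c g. vsmult (mconst c) g)"
  unfolding quot_iso_def wv_def[symmetric]
proof (rule exI[of _ Phi2], intro conjI)
  let ?W = "{g. \<exists>f. in_ideal \<phi> (dot f (grad \<phi>)) \<and> vin_ideal \<phi> (g - wv \<phi> f)}"
  have W0: "0 \<in> ?W" by (intro CollectI exI[of _ 0]) simp
  show "\<forall>z\<in>cocycles \<phi> 2. Phi2 z \<in> {g. \<exists>f. vin_ideal \<phi> (cross f (grad \<phi>)) \<and> vin_ideal \<phi> (g - f)}"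
  proof
    fix z assume z: "z \<in> cocycles \<phi> 2"
    then have sd: "skew_derivation \<phi> 2 z" unfolding cocycles_def by simp
    show "Phi2 z \<in> {g. \<exists>f. vin_ideal \<phi> (cross f (grad \<phi>)) \<and> vin_ideal \<phi> (g - f)}"
      using der2_cross[OF sd] by (intro CollectI exI[of _ "Phi2 z"]) simp
  qed
  show "\<forall>z1\<in>cocycles \<phi> 2. \<forall>z2\<in>cocycles \<phi> 2. Phi2 (z1 + z2) - (Phi2 z1 + Phi2 z2) \<in> ?W"
    using W0 by (simp add: Phi2_def)
  show "\<forall>c. \<forall>z\<in>cocycles \<phi> 2. Phi2 (cochain_smult c z) - vsmult (mconst c) (Phi2 z) \<in> ?W"
    using W0 by (simp add: Phi2_def cochain_smult_def vsmult_def)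
  show "\<forall>v\<in>{g. \<exists>f. vin_ideal \<phi> (cross f (grad \<phi>)) \<and> vin_ideal \<phi> (g - f)}. \<exists>z\<in>cocycles \<phi> 2. v - Phi2 z \<in> ?W"
  proof
    fix v assume "v \<in> {g. \<exists>f. vin_ideal \<phi> (cross f (grad \<phi>)) \<and> vin_ideal \<phi> (g - f)}"
    then obtain f where f: "vin_ideal \<phi> (cross f (grad \<phi>))" "vin_ideal \<phi> (v - f)" by auto
    have sd: "skew_derivation \<phi> 2 (Q2 f)" by (rule Q2_sd[OF f(1)])
    have "Q2 f \<in> cocycles \<phi> 2" by (rule cocycle2[OF wh sd])
    moreover have "v - Phi2 (Q2 f) \<in> ?W"
      using f(2) by (intro CollectI exI[of _ 0]) simp
    ultimately show "\<exists>z\<in>cocycles \<phi> 2. v - Phi2 z \<in> ?W" by blast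
  qed
  show "\<forall>z\<in>cocycles \<phi> 2. (Phi2 z \<in> ?W) = (z \<in> coboundaries \<phi> 2)"
  proof
    fix z assume z: "z \<in> cocycles \<phi> 2"
    then have sd: "skew_derivation \<phi> 2 z" unfolding cocycles_def by simp
    show "(Phi2 z \<in> ?W) = (z \<in> coboundaries \<phi> 2)"
    proof
      assume "Phi2 z \<in> ?W"
      then obtain f where f: "in_ideal \<phi> (dot f (grad \<phi>))" "vin_ideal \<phi> (Phi2 z - wv \<phi> f)" by auto
      have sdP: "skew_derivation \<phi> 1 (Q1 f)" by (rule Q1_sd[OF f(1)])
      have "in_ideal \<phi> (z fs - cobound \<phi> (Q1 f) fs)" if l: "length fs = 2" for fs
      proof -
        obtain g h where fs: "fs = [g, h]" using len2[OF l] by blast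
        have e: "z [g, h] - cobound \<phi> (Q1 f) [g, h] = (z [g, h] - Q2 (Phi2 z) [g, h]) + Q2 (Phi2 z - wv \<phi> f) [g, h]"
          unfolding H1_cob by (simp only: Q2_diff[symmetric]) simp
        show ?thesis unfolding fs e using chain2[OF sd] Q2_vin[OF f(2)] by (rule in_ideal_add)
      qed
      then show "z \<in> coboundaries \<phi> 2" unfolding coboundaries_def using sd sdP by auto
    next
      assume "z \<in> coboundaries \<phi> 2"
      then obtain P where sdP: "skew_derivation \<phi> 1 P"
        and P: "\<And>fs. length fs = 2 \<Longrightarrow> in_ideal \<phi> (z fs - cobound \<phi> P fs)"
        unfolding coboundaries_def by auto
      have c: "in_ideal \<phi> (z [g, h] - Q2 (wv \<phi> (Phi1 P)) [g, h])" for g h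
      proof -
        have "z [g, h] - Q2 (wv \<phi> (Phi1 P)) [g, h] = (z [g, h] - cobound \<phi> P [g, h])
            + (cobound \<phi> P [g, h] - cobound \<phi> (Q1 (Phi1 P)) [g, h])"
          by (simp add: H1_cob)
        then show ?thesis using in_ideal_add[OF P[of "[g, h]"] cob1_cong[OF sdP, of g h]] by simp
      qed
      have "vin_ideal \<phi> (Phi2 z - wv \<phi> (Phi1 P))"
        using c[of varY varZ] c[of varZ varX] c[of varX varY]
        unfolding Q2_basis by (simp add: Phi2_def vin_ideal_def)
      then show "Phi2 z \<in> ?W" using der1_dot[OF sdP] by blast
    qed
  qed
qed

theorem mainTheorem8:
  fixes \<phi> :: "'a::field_char_0 mpoly" and w1 w2 w3 :: nat
  assumes "w1 > 0" and "w2 > 0" and "w3 > 0" and "gcd w1 (gcd w2 w3) = 1"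
    and "whis w1 w2 w3 \<phi>"
  shows
    \<comment> \<open>every skew-symmetric 3-derivation is zero, hence H^3 = 0\<close>
    "(\<forall>Q. skew_derivation \<phi> 3 Q \<longrightarrow> (\<forall>fs. length fs = 3 \<longrightarrow> in_ideal \<phi> (Q fs)))
   \<and> cocycles \<phi> 3 \<subseteq> coboundaries \<phi> 3
    \<comment> \<open>1-derivations identified with pi{f | f.grad phi in <phi>}\<close>
   \<and> (\<forall>Q. skew_derivation \<phi> 1 Q \<longrightarrow>
        (\<exists>f. in_ideal \<phi> (dot f (grad \<phi>)) \<and> vin_ideal \<phi> ((Q [varX], Q [varY], Q [varZ]) - f)))
   \<and> (\<forall>f. in_ideal \<phi> (dot f (grad \<phi>)) \<longrightarrow>
        (\<exists>Q. skew_derivation \<phi> 1 Q \<and> vin_ideal \<phi> ((Q [varX], Q [varY], Q [varZ]) - f)))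
   \<and> (\<forall>Q Q'. skew_derivation \<phi> 1 Q \<longrightarrow> skew_derivation \<phi> 1 Q' \<longrightarrow>
        vin_ideal \<phi> ((Q [varX], Q [varY], Q [varZ]) - (Q' [varX], Q' [varY], Q' [varZ])) \<longrightarrow>
        (\<forall>fs. length fs = 1 \<longrightarrow> in_ideal \<phi> (Q fs - Q' fs)))
    \<comment> \<open>2-derivations identified with pi{f | f x grad phi in <phi>}\<close>
   \<and> (\<forall>Q. skew_derivation \<phi> 2 Q \<longrightarrow>
        (\<exists>f. vin_ideal \<phi> (cross f (grad \<phi>)) \<and>
             vin_ideal \<phi> ((Q [varY, varZ], Q [varZ, varX], Q [varX, varY]) - f)))
   \<and> (\<forall>f. vin_ideal \<phi> (cross f (grad \<phi>)) \<longrightarrow>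
        (\<exists>Q. skew_derivation \<phi> 2 Q \<and>
             vin_ideal \<phi> ((Q [varY, varZ], Q [varZ, varX], Q [varX, varY]) - f)))
   \<and> (\<forall>Q Q'. skew_derivation \<phi> 2 Q \<longrightarrow> skew_derivation \<phi> 2 Q' \<longrightarrow>
        vin_ideal \<phi> ((Q [varY, varZ], Q [varZ, varX], Q [varX, varY])
                      - (Q' [varY, varZ], Q' [varZ, varX], Q' [varX, varY])) \<longrightarrow>
        (\<forall>fs. length fs = 2 \<longrightarrow> in_ideal \<phi> (Q fs - Q' fs)))
    \<comment> \<open>H^0\<close>
   \<and> quot_iso (cocycles \<phi> 0) (coboundaries \<phi> 0) cochain_smult
        {g. \<exists>f. vin_ideal \<phi> (cross (grad f) (grad \<phi>)) \<and> in_ideal \<phi> (g - f)}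
        {g. in_ideal \<phi> g}
        (\<lambda>c g. mconst c * g)
    \<comment> \<open>H^1\<close>
   \<and> quot_iso (cocycles \<phi> 1) (coboundaries \<phi> 1) cochain_smult
        {g. \<exists>f. in_ideal \<phi> (dot f (grad \<phi>)) \<and>
               vin_ideal \<phi> (- grad (dot f (grad \<phi>)) + vsmult (Div f) (grad \<phi>)) \<and>
               vin_ideal \<phi> (g - f)}
        {g. \<exists>f. vin_ideal \<phi> (g - cross (grad f) (grad \<phi>))}
        (\<lambda>c g. vsmult (mconst c) g)
    \<comment> \<open>H^2\<close>
   \<and> quot_iso (cocycles \<phi> 2) (coboundaries \<phi> 2) cochain_smult
        {g. \<exists>f. vin_ideal \<phi> (cross f (grad \<phi>)) \<and> vin_ideal \<phi> (g - f)}
        {g. \<exists>f. in_ideal \<phi> (dot f (grad \<phi>)) \<and>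
               vin_ideal \<phi> (g - (- grad (dot f (grad \<phi>)) + vsmult (Div f) (grad \<phi>)))}
        (\<lambda>c g. vsmult (mconst c) g)"
proof -
  note wh = assms(5)
  have P1: "\<forall>Q. skew_derivation \<phi> 3 Q \<longrightarrow> (\<forall>fs. length fs = 3 \<longrightarrow> in_ideal \<phi> (Q fs))"
  proof (intro allI impI)
    fix Q :: "'a mpoly list \<Rightarrow> 'a mpoly" and fs :: "'a mpoly list"
    assume Q: "skew_derivation \<phi> 3 Q" and l: "length fs = 3"
    obtain g h k where "fs = [g, h, k]" using len3[OF l] by blast
    then show "in_ideal \<phi> (Q fs)" using sd3_vanish[OF wh Q] by simp
  qed
  have P2: "cocycles \<phi> 3 \<subseteq> coboundaries \<phi> 3"
  proof
    fix Q assume "Q \<in> cocycles \<phi> 3"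
    then have Q: "skew_derivation \<phi> 3 Q" unfolding cocycles_def by simp
    have z: "skew_derivation \<phi> 2 (\<lambda>_. 0)" by (simp add: skew_derivation_def)
    have c0: "cobound \<phi> (\<lambda>_. 0) fs = 0" for fs
      unfolding cobound_def by (simp add: sum.neutral)
    show "Q \<in> coboundaries \<phi> 3"
      unfolding coboundaries_def using Q z P1 by (auto simp: c0 intro!: exI[of _ "\<lambda>_. 0"])
  qed
  have P3: "\<forall>Q. skew_derivation \<phi> 1 Q \<longrightarrow>
        (\<exists>f. in_ideal \<phi> (dot f (grad \<phi>)) \<and> vin_ideal \<phi> ((Q [varX], Q [varY], Q [varZ]) - f))"
  proof (intro allI impI)
    fix Q :: "'a mpoly list \<Rightarrow> 'a mpoly" assume Q: "skew_derivation \<phi> 1 Q"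
    show "\<exists>f. in_ideal \<phi> (dot f (grad \<phi>)) \<and> vin_ideal \<phi> ((Q [varX], Q [varY], Q [varZ]) - f)"
      using der1_dot[OF Q] by (intro exI[of _ "Phi1 Q"]) (simp add: Phi1_def)
  qed
  have P4: "\<forall>f. in_ideal \<phi> (dot f (grad \<phi>)) \<longrightarrow>
        (\<exists>Q. skew_derivation \<phi> 1 Q \<and> vin_ideal \<phi> ((Q [varX], Q [varY], Q [varZ]) - f))"
  proof (intro allI impI)
    fix f :: "'a vec3" assume f: "in_ideal \<phi> (dot f (grad \<phi>))"
    show "\<exists>Q. skew_derivation \<phi> 1 Q \<and> vin_ideal \<phi> ((Q [varX], Q [varY], Q [varZ]) - f)"
      using Q1_sd[OF f] Phi1_Q1[of f] by (intro exI[of _ "Q1 f"]) (simp add: Phi1_def)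
  qed
  have P5: "\<forall>Q Q'. skew_derivation \<phi> 1 Q \<longrightarrow> skew_derivation \<phi> 1 Q' \<longrightarrow>
        vin_ideal \<phi> ((Q [varX], Q [varY], Q [varZ]) - (Q' [varX], Q' [varY], Q' [varZ])) \<longrightarrow>
        (\<forall>fs. length fs = 1 \<longrightarrow> in_ideal \<phi> (Q fs - Q' fs))"
  proof (intro allI impI)
    fix Q Q' :: "'a mpoly list \<Rightarrow> 'a mpoly" and fs :: "'a mpoly list"
    assume Q: "skew_derivation \<phi> 1 Q" and Q': "skew_derivation \<phi> 1 Q'"
      and d: "vin_ideal \<phi> ((Q [varX], Q [varY], Q [varZ]) - (Q' [varX], Q' [varY], Q' [varZ]))"
      and l: "length fs = 1"
    obtain g where "fs = [g]" using len1[OF l] by blast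
    then show "in_ideal \<phi> (Q fs - Q' fs)" using uniq1[OF Q Q'] d by (simp add: Phi1_def)
  qed
  have P6: "\<forall>Q. skew_derivation \<phi> 2 Q \<longrightarrow>
        (\<exists>f. vin_ideal \<phi> (cross f (grad \<phi>)) \<and>
             vin_ideal \<phi> ((Q [varY, varZ], Q [varZ, varX], Q [varX, varY]) - f))"
  proof (intro allI impI)
    fix Q :: "'a mpoly list \<Rightarrow> 'a mpoly" assume Q: "skew_derivation \<phi> 2 Q"
    show "\<exists>f. vin_ideal \<phi> (cross f (grad \<phi>)) \<and>
             vin_ideal \<phi> ((Q [varY, varZ], Q [varZ, varX], Q [varX, varY]) - f)"
      using der2_cross[OF Q] by (intro exI[of _ "Phi2 Q"]) (simp add: Phi2_def)
  qed
  have P7: "\<forall>f. vin_ideal \<phi> (cross f (grad \<phi>)) \<longrightarrow>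
        (\<exists>Q. skew_derivation \<phi> 2 Q \<and>
             vin_ideal \<phi> ((Q [varY, varZ], Q [varZ, varX], Q [varX, varY]) - f))"
  proof (intro allI impI)
    fix f :: "'a vec3" assume f: "vin_ideal \<phi> (cross f (grad \<phi>))"
    show "\<exists>Q. skew_derivation \<phi> 2 Q \<and>
             vin_ideal \<phi> ((Q [varY, varZ], Q [varZ, varX], Q [varX, varY]) - f)"
      using Q2_sd[OF f] Phi2_Q2[of f] by (intro exI[of _ "Q2 f"]) (simp add: Phi2_def)
  qed
  have P8: "\<forall>Q Q'. skew_derivation \<phi> 2 Q \<longrightarrow> skew_derivation \<phi> 2 Q' \<longrightarrow>
        vin_ideal \<phi> ((Q [varY, varZ], Q [varZ, varX], Q [varX, varY])
                      - (Q' [varY, varZ], Q' [varZ, varX], Q' [varX, varY])) \<longrightarrow>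
        (\<forall>fs. length fs = 2 \<longrightarrow> in_ideal \<phi> (Q fs - Q' fs))"
  proof (intro allI impI)
    fix Q Q' :: "'a mpoly list \<Rightarrow> 'a mpoly" and fs :: "'a mpoly list"
    assume Q: "skew_derivation \<phi> 2 Q" and Q': "skew_derivation \<phi> 2 Q'"
      and d: "vin_ideal \<phi> ((Q [varY, varZ], Q [varZ, varX], Q [varX, varY])
                      - (Q' [varY, varZ], Q' [varZ, varX], Q' [varX, varY]))"
      and l: "length fs = 2"
    obtain g h where "fs = [g, h]" using len2[OF l] by blast
    then show "in_ideal \<phi> (Q fs - Q' fs)" using uniq2[OF Q Q'] d by (simp add: Phi2_def)
  qed
  show ?thesis
    using P1 P2 P3 P4 P5 P6 P7 P8 H0_iso[of \<phi>] H1_iso[of \<phi>] H2_iso[OF wh]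
    by blast
qed

end
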